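(* Let $\mathbb{F}$ be an algebraically closed field of characteristic $p>2$ and $I=\{0,1,\dots,p-1\}$. Define the linear maps $\Theta_W: W(1)\to W(n)$, $x_1^i\partial_1\mapsto x_1^i\partial_1$ ($n\ge 1$); $\Theta_S: W(1)\to S(n)$, $x_1^i\partial_1\mapsto D_{12}(x_1^ix_2)=x_1^i\partial_1-ix_1^{i-1}x_2\partial_2$ ($n\geq 2$); $\Theta_H: W(1)\to H(2r)$, $x_1^i\partial_1\mapsto -D_H(x_1^ix_{r+1})=x_1^i\partial_1-ix_1^{i-1}x_{r+1}\partial_{r+1}$ ($r\ge1$); $\Theta_K: W(1)\to K(2r+1)$, $x_1^i\partial_1\mapsto \frac12 D_K(x_{2r+1}^i)$ ($r\ge 1$), for all $i\in I$. Then for each $X\in\{W,S,H,K\}$, $\Theta_X$ is an injective homomorphism of restricted Lie algebras from the Witt algebra $W(1)$ into $X(n)$ (where $n=2r$ for $X=H$ and $n=2r+1$ for $X=K$).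
   Context: $\mathcal{A}(n)$ is the truncated polynomial algebra: the commutative associative $\mathbb{F}$-algebra with basis $\{x^\alpha\mid \alpha\in I^n\}$ and $x^\alpha x^\beta=x^{\alpha+\beta}$, where $x^\gamma=0$ if $\gamma\notin I^n$; $x_i=x^{\varepsilon_i}$. $W(n)$ (Jacobson–Witt algebra) is the derivation algebra of $\mathcal{A}(n)$; it is a free $\mathcal{A}(n)$-module with basis $\partial_1,\dots,\partial_n$, $\partial_i(x_j)=\delta_{ij}$; $W(1)$ is the Witt algebra. For $f\in\mathcal A(n)$, $D_{ij}(f)=\partial_j(f)\partial_i-\partial_i(f)\partial_j$. $\widetilde S(n)=\{\sum f_i\partial_i\in W(n)\mid \sum_i\partial_i(f_i)=0\}$ and the special algebra is $S(n)=[\widetilde S(n),\widetilde S(n)]$. For $1\le i\le 2r$ let $\sigma(i)=1$ if $i\le r$, $\sigma(i)=-1$ if $i>r$, and $i'=i+r$ if $i\le r$, $i'=i-r$ if $i>r$. $D_H(f)=\sum_{i=1}^{2r}\sigma(i)\partial_i(f)\partial_{i'}$ for $f\in\mathcal A(2r)$, and the Hamiltonian algebra is $H(2r)=\mathrm{span}_{\mathbb F}\{D_H(x^\alpha)\mid \alpha\in I^{2r},\ \alpha\neq 0,\ \alpha\neq(p-1,\dots,p-1)\}$. For $f\in\mathcal A(2r+1)$, $D_K(f)=\sum_{i=1}^{2r+1}f_i\partial_i$ with $f_j=x_j\partial_{2r+1}(f)+\sigma(j')\partial_{j'}(f)$ for $j\le 2r$ and $f_{2r+1}=2f-\sum_{j=1}^{2r}\sigma(j)x_jf_{j'}$;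 $\widetilde K(2r+1)=\mathrm{span}_{\mathbb F}\{D_K(x^\alpha)\mid\alpha\in I^{2r+1}\}$ and the contact algebra is $K(2r+1)=[\widetilde K(2r+1),\widetilde K(2r+1)]$. All of these are restricted Lie algebras with $p$-map given by taking the $p$-th power of derivations. *)

theory Defs
  imports "HOL-Computational_Algebra.Polynomial"
begin

text \<open>The characteristic p of the field is CHAR('a). Variables are 0-based:
  paper's x_1..x_n are x_0..x_(n-1) here. A multi-index is a function nat => nat;
  I^n is represented by idx p n (entries < p, zero beyond n).
  An element of A(n) is a coefficient function on multi-indices vanishing outside I^n.
  An element of W(n) is a function j |-> coefficient of d_j (zero for j >= n).\<close>

type_synonym 'a tpoly = "(nat \<Rightarrow> nat) \<Rightarrow> 'a"
type_synonym 'a wder = "nat \<Rightarrow> 'a tpoly"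

definition idx :: "nat \<Rightarrow> nat \<Rightarrow> (nat \<Rightarrow> nat) set" where
  "idx p n = {\<alpha>. (\<forall>i. \<alpha> i < p) \<and> (\<forall>i\<ge>n. \<alpha> i = 0)}"

definition pzero :: "'a::field tpoly" where "pzero = (\<lambda>_. 0)"

definition tpa :: "nat \<Rightarrow> 'a::field tpoly set" where
  "tpa n = {f. \<forall>\<alpha>. \<alpha> \<notin> idx CHAR('a) n \<longrightarrow> f \<alpha> = 0}"

definition xmon :: "nat \<Rightarrow> (nat \<Rightarrow> nat) \<Rightarrow> 'a::field tpoly" where
  "xmon n \<alpha> = (\<lambda>\<beta>. if \<beta> = \<alpha> \<and> \<alpha> \<in> idx CHAR('a) n then 1 else 0)"

definition eps :: "nat \<Rightarrow> nat \<Rightarrow> nat" where "eps j = (\<lambda>k. if k = j then 1 else 0)"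

definition xvar :: "nat \<Rightarrow> nat \<Rightarrow> 'a::field tpoly" where "xvar n j = xmon n (eps j)"

definition padd :: "'a::field tpoly \<Rightarrow> 'a tpoly \<Rightarrow> 'a tpoly" where
  "padd f g = (\<lambda>\<gamma>. f \<gamma> + g \<gamma>)"

definition psmul :: "'a::field \<Rightarrow> 'a tpoly \<Rightarrow> 'a tpoly" where
  "psmul c f = (\<lambda>\<gamma>. c * f \<gamma>)"

text \<open>truncated product: x^alpha x^beta = x^(alpha+beta), zero outside I^n\<close>
definition pmul :: "nat \<Rightarrow> 'a::field tpoly \<Rightarrow> 'a tpoly \<Rightarrow> 'a tpoly" where
  "pmul n f g = (\<lambda>\<gamma>. if \<gamma> \<in> idx CHAR('a) n then
     (\<Sum>\<alpha>\<in>idx CHAR('a) n. \<Sum>\<beta>\<in>idx CHAR('a) n.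
        if (\<lambda>k. \<alpha> k + \<beta> k) = \<gamma> then f \<alpha> * g \<beta> else 0) else 0)"

text \<open>partial derivative d_i on A(n): d_i(x^alpha) = alpha_i x^(alpha - eps_i)\<close>
definition pd :: "nat \<Rightarrow> nat \<Rightarrow> 'a::field tpoly \<Rightarrow> 'a tpoly" where
  "pd n i f = (\<lambda>\<beta>. if \<beta> \<in> idx CHAR('a) n \<and> \<beta>(i := Suc (\<beta> i)) \<in> idx CHAR('a) n
      then of_nat (Suc (\<beta> i)) * f (\<beta>(i := Suc (\<beta> i))) else 0)"

definition Wn :: "nat \<Rightarrow> 'a::field wder set" where
  "Wn n = {D. (\<forall>i<n. D i \<in> tpa n) \<and> (\<forall>i\<ge>n. D i = pzero)}"

definition wact :: "nat \<Rightarrow> 'a::field wder \<Rightarrow> 'a tpoly \<Rightarrow> 'a tpoly" where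
  "wact n D h = (\<lambda>\<gamma>. \<Sum>i<n. pmul n (D i) (pd n i h) \<gamma>)"

definition wadd :: "'a::field wder \<Rightarrow> 'a wder \<Rightarrow> 'a wder" where
  "wadd D E = (\<lambda>j. padd (D j) (E j))"

definition wsmul :: "'a::field \<Rightarrow> 'a wder \<Rightarrow> 'a wder" where
  "wsmul c D = (\<lambda>j. psmul c (D j))"

definition wzero :: "'a::field wder" where "wzero = (\<lambda>_. pzero)"

text \<open>commutator [D,E] = DE - ED; its d_j-coefficient is D(E_j) - E(D_j)\<close>
definition wbr :: "nat \<Rightarrow> 'a::field wder \<Rightarrow> 'a wder \<Rightarrow> 'a wder" where
  "wbr n D E = (\<lambda>j. if j < n then (\<lambda>\<gamma>. wact n D (E j) \<gamma> - wact n E (D j) \<gamma>) else pzero)"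

text \<open>p-map: the p-th power D^p of the derivation D, as an element of W(n) it is
  determined by its values D^p(x_j) on the generators\<close>
definition wpow :: "nat \<Rightarrow> 'a::field wder \<Rightarrow> 'a wder" where
  "wpow n D = (\<lambda>j. if j < n then ((wact n D) ^^ CHAR('a)) (xvar n j) else pzero)"

inductive_set lspan :: "'a::field wder set \<Rightarrow> 'a wder set" for A where
  lspan_zero: "wzero \<in> lspan A"
| lspan_step: "D \<in> A \<Longrightarrow> E \<in> lspan A \<Longrightarrow> wadd (wsmul c D) E \<in> lspan A"

definition Stilde :: "nat \<Rightarrow> 'a::field wder set" where
  "Stilde n = {D \<in> Wn n. \<forall>\<gamma>. (\<Sum>i<n. pd n i (D i) \<gamma>) = 0}"

definition Sn :: "nat \<Rightarrow> 'a::field wder set" where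
  "Sn n = lspan {wbr n D E | D E. D \<in> Stilde n \<and> E \<in> Stilde n}"

definition Dij :: "nat \<Rightarrow> nat \<Rightarrow> nat \<Rightarrow> 'a::field tpoly \<Rightarrow> 'a wder" where
  "Dij n i j f = (\<lambda>k. if k = i then pd n j f
                      else if k = j then psmul (-1) (pd n i f) else pzero)"

text \<open>sigma and i' (0-based: indices 0..2r-1)\<close>
definition sig :: "nat \<Rightarrow> nat \<Rightarrow> 'a::field" where "sig r i = (if i < r then 1 else -1)"
definition prm :: "nat \<Rightarrow> nat \<Rightarrow> nat" where "prm r i = (if i < r then i + r else i - r)"

text \<open>D_H(f) = sum_i sigma(i) d_i(f) d_(i'); its d_j-coefficient is sigma(j') d_(j')(f)\<close>
definition DH :: "nat \<Rightarrow> 'a::field tpoly \<Rightarrow> 'a wder" where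
  "DH r f = (\<lambda>j. if j < 2*r then psmul (sig r (prm r j)) (pd (2*r) (prm r j) f) else pzero)"

definition Hn :: "nat \<Rightarrow> 'a::field wder set" where
  "Hn r = lspan {DH r (xmon (2*r) \<alpha>) | \<alpha>. \<alpha> \<in> idx CHAR('a) (2*r) \<and> \<alpha> \<noteq> (\<lambda>_. 0)
                  \<and> \<alpha> \<noteq> (\<lambda>k. if k < 2*r then CHAR('a) - 1 else 0)}"

text \<open>contact algebra; the last variable x_(2r+1) of the paper is x_(2r) here\<close>
definition DKc :: "nat \<Rightarrow> 'a::field tpoly \<Rightarrow> nat \<Rightarrow> 'a tpoly" where
  "DKc r f j = padd (pmul (2*r+1) (xvar (2*r+1) j) (pd (2*r+1) (2*r) f))
                    (psmul (sig r (prm r j)) (pd (2*r+1) (prm r j) f))"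

definition DK :: "nat \<Rightarrow> 'a::field tpoly \<Rightarrow> 'a wder" where
  "DK r f = (\<lambda>j. if j < 2*r then DKc r f j
     else if j = 2*r then (\<lambda>\<gamma>. 2 * f \<gamma>
        - (\<Sum>i<2*r. sig r i * pmul (2*r+1) (xvar (2*r+1) i) (DKc r f (prm r i)) \<gamma>))
     else pzero)"

definition Ktilde :: "nat \<Rightarrow> 'a::field wder set" where
  "Ktilde r = lspan {DK r (xmon (2*r+1) \<alpha>) | \<alpha>. \<alpha> \<in> idx CHAR('a) (2*r+1)}"

definition Kn :: "nat \<Rightarrow> 'a::field wder set" where
  "Kn r = lspan {wbr (2*r+1) D E | D E. D \<in> Ktilde r \<and> E \<in> Ktilde r}"

definition imgW :: "nat \<Rightarrow> nat \<Rightarrow> 'a::field wder" where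
  "imgW n i = (\<lambda>j. if j = 0 then xmon n (\<lambda>k. if k = 0 then i else 0) else pzero)"

definition imgS :: "nat \<Rightarrow> nat \<Rightarrow> 'a::field wder" where
  "imgS n i = Dij n 0 1 (xmon n (\<lambda>k. if k = 0 then i else if k = 1 then 1 else 0))"

definition imgH :: "nat \<Rightarrow> nat \<Rightarrow> 'a::field wder" where
  "imgH r i = wsmul (-1) (DH r (xmon (2*r) (\<lambda>k. if k = 0 then i else if k = r then 1 else 0)))"

definition imgK :: "nat \<Rightarrow> nat \<Rightarrow> 'a::field wder" where
  "imgK r i = wsmul (1/2) (DK r (xmon (2*r+1) (\<lambda>k. if k = 2*r then i else 0)))"

definition theta :: "(nat \<Rightarrow> 'a::field wder) \<Rightarrow> 'a wder \<Rightarrow> 'a wder" where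
  "theta img D = (\<lambda>j \<gamma>. \<Sum>i<CHAR('a). D 0 (\<lambda>k. if k = 0 then i else 0) * img i j \<gamma>)"

definition inj_rhom :: "nat \<Rightarrow> 'a::field wder set \<Rightarrow> ('a wder \<Rightarrow> 'a wder) \<Rightarrow> bool" where
  "inj_rhom n L \<Theta> \<longleftrightarrow>
     (\<forall>D\<in>Wn 1. \<Theta> D \<in> L)
   \<and> (\<forall>D\<in>Wn 1. \<forall>E\<in>Wn 1. \<Theta> (wadd D E) = wadd (\<Theta> D) (\<Theta> E))
   \<and> (\<forall>c. \<forall>D\<in>Wn 1. \<Theta> (wsmul c D) = wsmul c (\<Theta> D))
   \<and> (\<forall>D\<in>Wn 1. \<forall>E\<in>Wn 1. \<Theta> (wbr 1 D E) = wbr n (\<Theta> D) (\<Theta> E))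
   \<and> (\<forall>D\<in>Wn 1. \<Theta> (wpow 1 D) = wpow n (\<Theta> D))
   \<and> inj_on \<Theta> (Wn 1)"

end

theory Submission
  imports Defs "HOL-Computational_Algebra.Primes"
begin


lemma finite_idx: "finite (idx p n)"
proof -
  have "idx p n \<subseteq> {f. \<forall>x. (x \<in> {..<n} \<longrightarrow> f x \<in> {..<p}) \<and> (x \<notin> {..<n} \<longrightarrow> f x = 0)}"
    by (auto simp: idx_def)
  moreover have "finite {f. \<forall>x. (x \<in> {..<n} \<longrightarrow> f x \<in> {..<p}) \<and> (x \<notin> {..<n} \<longrightarrow> f x = (0::nat))}"
    by (rule finite_set_of_finite_funs) auto
  ultimately show ?thesis by (rule finite_subset)
qed

lemma pmul_out: "\<gamma> \<notin> idx CHAR('a) n \<Longrightarrow> pmul n (f::'a::field tpoly) g \<gamma> = 0"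
  by (simp add: pmul_def)

lemma pmul_tpa: "pmul n (f::'a::field tpoly) g \<in> tpa n"
  by (simp add: tpa_def pmul_def)

lemma pmul_comm: "pmul n (f::'a::field tpoly) g = pmul n g f"
proof (rule ext)
  fix \<gamma>
  show "pmul n f g \<gamma> = pmul n g f \<gamma>"
    unfolding pmul_def
    apply (subst sum.swap)
    apply (auto intro!: sum.cong simp: add.commute mult.commute)
    done
qed

lemma sum_if_eq: "finite A \<Longrightarrow> (\<Sum>x\<in>A. if x = a then P x else 0) = (if a \<in> A then P a else 0)"
  by (simp add: sum.delta')

lemma pmul_triple:
  fixes f g h :: "'a::field tpoly"
  assumes "\<gamma> \<in> idx CHAR('a) n"
  shows "pmul n (pmul n f g) h \<gamma> =
    (\<Sum>a\<in>idx CHAR('a) n. \<Sum>b\<in>idx CHAR('a) n. \<Sum>c\<in>idx CHAR('a) n.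
       if (\<lambda>k. a k + b k + c k) = \<gamma> then f a * g b * h c else 0)"
proof -
  let ?I = "idx CHAR('a) n"
  have fin: "finite ?I" by (rule finite_idx)
  let ?X = "\<lambda>\<alpha> a b c. if (\<lambda>k. a k + b k) = \<alpha> \<and> (\<lambda>k. \<alpha> k + c k) = \<gamma> then f a * g b * h c else 0"
  have "pmul n (pmul n f g) h \<gamma> = (\<Sum>\<alpha>\<in>?I. \<Sum>c\<in>?I.
      if (\<lambda>k. \<alpha> k + c k) = \<gamma> then (\<Sum>a\<in>?I. \<Sum>b\<in>?I. if (\<lambda>k. a k + b k) = \<alpha> then f a * g b else 0) * h c else 0)"
    using assms unfolding pmul_def by (auto intro!: sum.cong)
  also have "\<dots> = (\<Sum>\<alpha>\<in>?I. \<Sum>c\<in>?I. \<Sum>a\<in>?I. \<Sum>b\<in>?I. ?X \<alpha> a b c)"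
    by (intro sum.cong refl) (auto simp: sum_distrib_right intro!: sum.cong)
  also have "\<dots> = (\<Sum>\<alpha>\<in>?I. \<Sum>a\<in>?I. \<Sum>c\<in>?I. \<Sum>b\<in>?I. ?X \<alpha> a b c)"
    by (rule sum.cong[OF refl], rule sum.swap)
  also have "\<dots> = (\<Sum>a\<in>?I. \<Sum>\<alpha>\<in>?I. \<Sum>c\<in>?I. \<Sum>b\<in>?I. ?X \<alpha> a b c)"
    by (rule sum.swap)
  also have "\<dots> = (\<Sum>a\<in>?I. \<Sum>\<alpha>\<in>?I. \<Sum>b\<in>?I. \<Sum>c\<in>?I. ?X \<alpha> a b c)"
    by (rule sum.cong[OF refl], rule sum.cong[OF refl], rule sum.swap)
  also have "\<dots> = (\<Sum>a\<in>?I. \<Sum>b\<in>?I. \<Sum>\<alpha>\<in>?I. \<Sum>c\<in>?I. ?X \<alpha> a b c)"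
    by (rule sum.cong[OF refl], rule sum.swap)
  also have "\<dots> = (\<Sum>a\<in>?I. \<Sum>b\<in>?I. \<Sum>c\<in>?I. \<Sum>\<alpha>\<in>?I. ?X \<alpha> a b c)"
    by (rule sum.cong[OF refl], rule sum.cong[OF refl], rule sum.swap)
  also have "\<dots> = (\<Sum>a\<in>?I. \<Sum>b\<in>?I. \<Sum>c\<in>?I.
       if (\<lambda>k. a k + b k + c k) = \<gamma> then f a * g b * h c else 0)"
  proof (intro sum.cong refl)
    fix a b c assume abc: "a \<in> ?I" "b \<in> ?I" "c \<in> ?I"
    have eq: "(\<Sum>\<alpha>\<in>?I. if (\<lambda>k. a k + b k) = \<alpha> \<and> (\<lambda>k. \<alpha> k + c k) = \<gamma> then f a * g b * h c else 0)
        = (\<Sum>\<alpha>\<in>?I. if \<alpha> = (\<lambda>k. a k + b k) then (if (\<lambda>k. a k + b k + c k) = \<gamma> then f a * g b * h c else 0) else 0)"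
      by (rule sum.cong[OF refl]) (case_tac "x = (\<lambda>k. a k + b k)", auto)
    have mem: "(\<lambda>k. a k + b k + c k) = \<gamma> \<Longrightarrow> (\<lambda>k. a k + b k) \<in> ?I"
    proof -
      assume H: "(\<lambda>k. a k + b k + c k) = \<gamma>"
      have e: "\<And>k. a k + b k + c k = \<gamma> k" using fun_cong[OF H] by simp
      have g: "\<And>k. \<gamma> k < CHAR('a)" "\<And>k. k \<ge> n \<Longrightarrow> \<gamma> k = 0" using assms by (auto simp: idx_def)
      show ?thesis unfolding idx_def mem_Collect_eq
      proof (intro conjI allI impI)
        fix i show "a i + b i < CHAR('a)" using e[of i] g(1)[of i] by linarith
      next
        fix i assume "n \<le> i" thus "a i + b i = 0" using e[of i] g(2)[of i] by linarith
      qed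
    qed
    show "(\<Sum>\<alpha>\<in>?I. if (\<lambda>k. a k + b k) = \<alpha> \<and> (\<lambda>k. \<alpha> k + c k) = \<gamma> then f a * g b * h c else 0)
       = (if (\<lambda>k. a k + b k + c k) = \<gamma> then f a * g b * h c else 0)"
      unfolding eq using mem by (subst sum.delta[OF fin]) auto
  qed
  finally show ?thesis .
qed

lemma pmul_assoc:
  fixes f g h :: "'a::field tpoly"
  shows "pmul n (pmul n f g) h = pmul n f (pmul n g h)"
proof (rule ext)
  fix \<gamma>
  let ?I = "idx CHAR('a) n"
  show "pmul n (pmul n f g) h \<gamma> = pmul n f (pmul n g h) \<gamma>"
  proof (cases "\<gamma> \<in> ?I")
    case False thus ?thesis by (simp add: pmul_out)
  next
    case True
    have "pmul n f (pmul n g h) \<gamma> = pmul n (pmul n g h) f \<gamma>" by (simp add: pmul_comm)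
    also have "\<dots> = (\<Sum>b\<in>?I. \<Sum>c\<in>?I. \<Sum>a\<in>?I.
       if (\<lambda>k. b k + c k + a k) = \<gamma> then g b * h c * f a else 0)"
      by (rule pmul_triple[OF True])
    also have "\<dots> = (\<Sum>b\<in>?I. \<Sum>a\<in>?I. \<Sum>c\<in>?I.
       if (\<lambda>k. a k + b k + c k) = \<gamma> then f a * g b * h c else 0)"
      by (rule sum.cong[OF refl], rule sum.swap[THEN trans], intro sum.cong refl)
         (simp add: ac_simps)
    also have "\<dots> = (\<Sum>a\<in>?I. \<Sum>b\<in>?I. \<Sum>c\<in>?I.
       if (\<lambda>k. a k + b k + c k) = \<gamma> then f a * g b * h c else 0)"
      by (rule sum.swap)
    also have "\<dots> = pmul n (pmul n f g) h \<gamma>"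
      by (rule pmul_triple[OF True, symmetric])
    finally show ?thesis ..
  qed
qed


definition wt :: "nat \<Rightarrow> (nat \<Rightarrow> nat) \<Rightarrow> (nat \<Rightarrow> nat) \<Rightarrow> (nat \<Rightarrow> nat) \<Rightarrow> 'a::field" where
  "wt n \<gamma> \<alpha> \<beta> = (if \<gamma> \<in> idx CHAR('a) n \<and> (\<lambda>k. \<alpha> k + \<beta> k) = \<gamma> then 1 else 0)"

lemma pmul_wt: "pmul n (f::'a::field tpoly) g \<gamma> =
  (\<Sum>\<alpha>\<in>idx CHAR('a) n. \<Sum>\<beta>\<in>idx CHAR('a) n. wt n \<gamma> \<alpha> \<beta> * (f \<alpha> * g \<beta>))"
  unfolding pmul_def by (cases "\<gamma> \<in> idx CHAR('a) n") (simp_all add: wt_def, (intro sum.cong refl, simp)+)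

lemma pmul_add_left: "pmul n (\<lambda>\<gamma>. F \<gamma> + G \<gamma>) (H::'a::field tpoly) = (\<lambda>\<gamma>. pmul n F H \<gamma> + pmul n G H \<gamma>)"
  by (rule ext) (simp only: pmul_wt distrib_left distrib_right sum.distrib)

lemma pmul_diff_left: "pmul n (\<lambda>\<gamma>. F \<gamma> - G \<gamma>) (H::'a::field tpoly) = (\<lambda>\<gamma>. pmul n F H \<gamma> - pmul n G H \<gamma>)"
  by (rule ext) (simp only: pmul_wt right_diff_distrib left_diff_distrib sum_subtractf)

lemma pmul_smul_left: "pmul n (\<lambda>\<gamma>. c * F \<gamma>) (H::'a::field tpoly) = (\<lambda>\<gamma>. c * pmul n F H \<gamma>)"
  by (rule ext) (simp add: pmul_wt sum_distrib_left ac_simps)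

lemma pmul_zero_left: "pmul n (\<lambda>\<gamma>. 0) (H::'a::field tpoly) = (\<lambda>\<gamma>. 0)"
  by (rule ext) (auto simp: pmul_def intro!: sum.neutral)

lemma pmul_sum_left: "pmul n (\<lambda>\<gamma>. \<Sum>i\<in>A. F i \<gamma>) (H::'a::field tpoly) = (\<lambda>\<gamma>. \<Sum>i\<in>A. pmul n (F i) H \<gamma>)"
proof (cases "finite A")
  case True thus ?thesis
    by (induction A rule: finite_induct) (simp_all add: pmul_zero_left pmul_add_left)
next
  case False thus ?thesis by (simp add: pmul_zero_left)
qed

lemma pmul_add_right: "pmul n (H::'a::field tpoly) (\<lambda>\<gamma>. F \<gamma> + G \<gamma>) = (\<lambda>\<gamma>. pmul n H F \<gamma> + pmul n H G \<gamma>)"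
  by (subst (1 2 3) pmul_comm) (rule pmul_add_left)
lemma pmul_diff_right: "pmul n (H::'a::field tpoly) (\<lambda>\<gamma>. F \<gamma> - G \<gamma>) = (\<lambda>\<gamma>. pmul n H F \<gamma> - pmul n H G \<gamma>)"
  by (subst (1 2 3) pmul_comm) (rule pmul_diff_left)
lemma pmul_smul_right: "pmul n (H::'a::field tpoly) (\<lambda>\<gamma>. c * F \<gamma>) = (\<lambda>\<gamma>. c * pmul n H F \<gamma>)"
  by (subst (1 2) pmul_comm) (rule pmul_smul_left)
lemma pmul_zero_right: "pmul n (H::'a::field tpoly) (\<lambda>\<gamma>. 0) = (\<lambda>\<gamma>. 0)"
  by (subst pmul_comm) (rule pmul_zero_left)

lemma pd_alt: "pd n i (F::'a::field tpoly) \<beta> = (if \<beta> \<in> idx CHAR('a) n \<and> \<beta>(i := Suc (\<beta> i)) \<in> idx CHAR('a) n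
      then of_nat (Suc (\<beta> i)) else 0) * F (\<beta>(i := Suc (\<beta> i)))"
  unfolding pd_def by simp
lemma pd_add: "pd n i (\<lambda>\<gamma>. F \<gamma> + G \<gamma>) = (\<lambda>\<gamma>. pd n i F \<gamma> + pd n i (G::'a::field tpoly) \<gamma>)"
  by (rule ext) (simp only: pd_alt distrib_left)
lemma pd_diff: "pd n i (\<lambda>\<gamma>. F \<gamma> - G \<gamma>) = (\<lambda>\<gamma>. pd n i F \<gamma> - pd n i (G::'a::field tpoly) \<gamma>)"
  by (rule ext) (simp only: pd_alt right_diff_distrib)
lemma pd_smul: "pd n i (\<lambda>\<gamma>. c * F \<gamma>) = (\<lambda>\<gamma>. c * pd n i (F::'a::field tpoly) \<gamma>)"
  by (rule ext) (simp only: pd_alt ac_simps)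
lemma pd_zero: "pd n i (\<lambda>\<gamma>. 0::'a::field) = (\<lambda>\<gamma>. 0)"
  by (auto simp: pd_def fun_eq_iff)
lemma pd_sum: "pd n i (\<lambda>\<gamma>. \<Sum>j\<in>A. F j \<gamma>) = (\<lambda>\<gamma>. \<Sum>j\<in>A. pd n i (F j::'a::field tpoly) \<gamma>)"
proof (cases "finite A")
  case True thus ?thesis
    by (induction A rule: finite_induct) (simp_all add: pd_zero pd_add)
next
  case False thus ?thesis by (simp add: pd_zero)
qed

lemma pd_tpa: "pd n i (f::'a::field tpoly) \<in> tpa n"
  by (simp add: tpa_def pd_def)


definition mono1 :: "nat \<Rightarrow> nat \<Rightarrow> nat" where "mono1 a = (\<lambda>l. if l = 0 then a else 0)"

lemma mono1_0[simp]: "mono1 a 0 = a" by (simp add: mono1_def)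
lemma mono1_inj[simp]: "mono1 a = mono1 b \<longleftrightarrow> a = b" by (auto simp: mono1_def fun_eq_iff)
lemma mono1_idx[simp]: "mono1 a \<in> idx p 1 \<longleftrightarrow> a < p" by (auto simp: mono1_def idx_def)
lemma mono1_idx'[simp]: "mono1 a \<in> idx p (Suc 0) \<longleftrightarrow> a < p" by (auto simp: mono1_def idx_def)
lemma idx1_eq: "\<alpha> \<in> idx p 1 \<Longrightarrow> \<alpha> = mono1 (\<alpha> 0)"
  by (auto simp: mono1_def idx_def fun_eq_iff)
lemma idx1_image: "idx p 1 = mono1 ` {..<p}"
proof (rule set_eqI, rule iffI)
  fix \<alpha> assume a: "\<alpha> \<in> idx p 1"
  hence "\<alpha> 0 < p" by (simp add: idx_def)
  moreover have "\<alpha> = mono1 (\<alpha> 0)" using a by (rule idx1_eq)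
  ultimately show "\<alpha> \<in> mono1 ` {..<p}" by blast
next
  fix \<alpha> assume "\<alpha> \<in> mono1 ` {..<p}"
  then obtain a where "a < p" "\<alpha> = mono1 a" by blast
  thus "\<alpha> \<in> idx p 1" by simp
qed
lemma sum_idx1: "(\<Sum>\<alpha>\<in>idx p 1. F \<alpha>) = (\<Sum>a<p. F (mono1 a))"
  unfolding idx1_image by (subst sum.reindex) (auto simp: inj_on_def)
lemma sum_idx1': "(\<Sum>\<alpha>\<in>idx p (Suc 0). F \<alpha>) = (\<Sum>a<p. F (mono1 a))"
  using sum_idx1 by simp

lemma mono1_upd[simp]: "(mono1 a)(0 := b) = mono1 b" by (auto simp: mono1_def)
lemma mono1_add[simp]: "(\<lambda>k. mono1 a k + mono1 b k) = mono1 (a + b)" by (auto simp: mono1_def)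

lemma ext1:
  fixes f g :: "'a::field tpoly"
  assumes "f \<in> tpa 1" "g \<in> tpa 1" "\<And>c. c < CHAR('a) \<Longrightarrow> f (mono1 c) = g (mono1 c)"
  shows "f = g"
proof
  fix \<alpha>
  show "f \<alpha> = g \<alpha>"
  proof (cases "\<alpha> \<in> idx CHAR('a) 1")
    case True
    have "\<alpha> 0 < CHAR('a)" using True by (simp add: idx_def)
    then show ?thesis using assms(3)[of "\<alpha> 0"] idx1_eq[OF True] by simp
  next
    case False
    then show ?thesis using assms(1,2) by (simp add: tpa_def)
  qed
qed

lemma tpa1_out: "f \<in> tpa 1 \<Longrightarrow> \<not> c < CHAR('a) \<Longrightarrow> (f::'a::field tpoly) (mono1 c) = 0"
  by (simp add: tpa_def del: One_nat_def)

lemma pd1_pt: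
  fixes f :: "'a::field tpoly"
  assumes "c < CHAR('a)"
  shows "pd 1 0 f (mono1 c) = (if c + 1 < CHAR('a) then of_nat (c+1) * f (mono1 (c+1)) else 0)"
  using assms by (auto simp add: pd_def)

lemma pd1_pt':
  fixes f :: "'a::field tpoly"
  assumes "c < CHAR('a)" "f \<in> tpa 1"
  shows "pd 1 0 f (mono1 c) = of_nat (c+1) * f (mono1 (c+1))"
  using assms by (auto simp add: pd1_pt tpa1_out simp del: One_nat_def)

lemma pmul1_pt:
  fixes f g :: "'a::field tpoly"
  assumes c: "c < CHAR('a)"
  shows "pmul 1 f g (mono1 c) = (\<Sum>a\<le>c. f (mono1 a) * g (mono1 (c - a)))"
proof -
  let ?p = "CHAR('a)"
  have "pmul 1 f g (mono1 c) = (\<Sum>a<?p. \<Sum>b<?p. if a + b = c then f (mono1 a) * g (mono1 b) else 0)"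
    using c unfolding pmul_def by (simp only: sum_idx1 mono1_add mono1_inj mono1_idx if_True) 
  also have "\<dots> = (\<Sum>a<?p. if a \<le> c then f (mono1 a) * g (mono1 (c - a)) else 0)"
  proof (rule sum.cong[OF refl])
    fix a assume "a \<in> {..<?p}"
    have "(\<Sum>b<?p. if a + b = c then f (mono1 a) * g (mono1 b) else 0)
        = (\<Sum>b<?p. if b = c - a then (if a \<le> c then f (mono1 a) * g (mono1 b) else 0) else 0)"
      by (rule sum.cong) auto
    also have "\<dots> = (if a \<le> c then f (mono1 a) * g (mono1 (c - a)) else 0)"
      using c by (subst sum.delta) auto
    finally show "(\<Sum>b<?p. if a + b = c then f (mono1 a) * g (mono1 b) else 0) = \<dots>" .
  qed
  also have "\<dots> = (\<Sum>a\<in>{..<?p} \<inter> {a. a \<le> c}. f (mono1 a) * g (mono1 (c - a)))"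
    by (simp add: sum.inter_restrict)
  also have "{..<?p} \<inter> {a. a \<le> c} = {..c}" using c by auto
  finally show ?thesis .
qed

definition one1 :: "'a::field tpoly" where "one1 = xmon 1 (mono1 0)"

lemma one1_pt: "0 < CHAR('a) \<Longrightarrow> one1 (mono1 c) = (if c = 0 then 1 else (0::'a::field))"
  by (auto simp: one1_def xmon_def)


lemma add_fun_eq_iff: fixes \<alpha> \<beta> \<gamma> :: "nat \<Rightarrow> nat" shows "((\<lambda>k. \<alpha> k + \<beta> k) = \<gamma>) \<longleftrightarrow> (\<forall>l. \<alpha> l \<le> \<gamma> l) \<and> \<beta> = (\<lambda>l. \<gamma> l - \<alpha> l)"
proof
  assume H: "(\<lambda>k. \<alpha> k + \<beta> k) = \<gamma>"
  have e: "\<And>k. \<alpha> k + \<beta> k = \<gamma> k" using fun_cong[OF H] by simp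
  show "(\<forall>l. \<alpha> l \<le> \<gamma> l) \<and> \<beta> = (\<lambda>l. \<gamma> l - \<alpha> l)"
  proof
    show "\<forall>l. \<alpha> l \<le> \<gamma> l"
    proof
      fix l show "\<alpha> l \<le> \<gamma> l" using e[of l] by linarith
    qed
    show "\<beta> = (\<lambda>l. \<gamma> l - \<alpha> l)"
    proof
      fix l show "\<beta> l = \<gamma> l - \<alpha> l" using e[of l] by linarith
    qed
  qed
next
  assume "(\<forall>l. \<alpha> l \<le> \<gamma> l) \<and> \<beta> = (\<lambda>l. \<gamma> l - \<alpha> l)"
  thus "(\<lambda>k. \<alpha> k + \<beta> k) = \<gamma>" by (intro ext) simp
qed

lemma le_idx: fixes \<alpha> :: "nat \<Rightarrow> nat" shows "\<gamma> \<in> idx p n \<Longrightarrow> (\<forall>l. \<alpha> l \<le> \<gamma> l) \<Longrightarrow> \<alpha> \<in> idx p n"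
  unfolding idx_def by (auto intro: le_less_trans) (metis le_zero_eq)

lemma diff_idx: "\<gamma> \<in> idx p n \<Longrightarrow> (\<lambda>l. \<gamma> l - \<alpha> l) \<in> idx p n"
  by (rule le_idx) auto

lemma pmul_conv:
  fixes F G :: "'a::field tpoly"
  assumes g: "\<gamma> \<in> idx CHAR('a) n"
  shows "pmul n F G \<gamma> = (\<Sum>\<alpha>\<in>idx CHAR('a) n.
     if (\<forall>l. \<alpha> l \<le> \<gamma> l) then F \<alpha> * G (\<lambda>l. \<gamma> l - \<alpha> l) else 0)"
proof -
  let ?I = "idx CHAR('a) n"
  have "pmul n F G \<gamma> = (\<Sum>\<alpha>\<in>?I. \<Sum>\<beta>\<in>?I. if (\<lambda>k. \<alpha> k + \<beta> k) = \<gamma> then F \<alpha> * G \<beta> else 0)"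
    using g by (simp add: pmul_def)
  also have "\<dots> = (\<Sum>\<alpha>\<in>?I. if (\<forall>l. \<alpha> l \<le> \<gamma> l) then F \<alpha> * G (\<lambda>l. \<gamma> l - \<alpha> l) else 0)"
  proof (rule sum.cong[OF refl])
    fix \<alpha>
    have "(\<Sum>\<beta>\<in>?I. if (\<lambda>k. \<alpha> k + \<beta> k) = \<gamma> then F \<alpha> * G \<beta> else 0)
       = (\<Sum>\<beta>\<in>?I. if \<beta> = (\<lambda>l. \<gamma> l - \<alpha> l) then (if (\<forall>l. \<alpha> l \<le> \<gamma> l) then F \<alpha> * G \<beta> else 0) else 0)"
      by (rule sum.cong[OF refl]) (simp only: add_fun_eq_iff, auto)
    also have "\<dots> = (if (\<forall>l. \<alpha> l \<le> \<gamma> l) then F \<alpha> * G (\<lambda>l. \<gamma> l - \<alpha> l) else 0)"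
      by (subst sum.delta[OF finite_idx]) (simp add: diff_idx[OF g])
    finally show "(\<Sum>\<beta>\<in>?I. if (\<lambda>k. \<alpha> k + \<beta> k) = \<gamma> then F \<alpha> * G \<beta> else 0) = \<dots>" .
  qed
  finally show ?thesis .
qed

lemma sum_reindex_supp:
  assumes "finite I" "inj_on e B" "e ` B \<subseteq> I" "\<And>x. x \<in> I \<Longrightarrow> x \<notin> e ` B \<Longrightarrow> X x = 0"
  shows "sum X I = sum (X \<circ> e) B"
proof -
  have "sum X I = sum X (e ` B)"
    by (rule sum.mono_neutral_right) (use assms in auto)
  also have "\<dots> = sum (X \<circ> e) B" by (rule sum.reindex[OF assms(2)])
  finally show ?thesis .
qed

definition shp :: "nat \<Rightarrow> nat \<Rightarrow> nat \<Rightarrow> (nat \<Rightarrow> nat) \<Rightarrow> bool" where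
  "shp k j m \<gamma> \<longleftrightarrow> (\<forall>l. l \<noteq> k \<longrightarrow> \<gamma> l = (if l = j then m else 0))"

definition ebd :: "nat \<Rightarrow> nat \<Rightarrow> nat \<Rightarrow> nat \<Rightarrow> 'a::field tpoly \<Rightarrow> 'a tpoly" where
  "ebd n k j m h = (\<lambda>\<gamma>. if \<gamma> \<in> idx CHAR('a) n \<and> shp k j m \<gamma> then h (mono1 (\<gamma> k)) else 0)"

lemma ebd_tpa: "ebd n k j m h \<in> tpa n"
  by (simp add: ebd_def tpa_def)

lemma ebd_alt: "ebd n k j m (h::'a::field tpoly) \<gamma> =
   (if \<gamma> \<in> idx CHAR('a) n \<and> shp k j m \<gamma> then 1 else 0) * h (mono1 (\<gamma> k))"
  by (simp add: ebd_def)

lemma ebd_add: "ebd n k j m (\<lambda>\<gamma>. F \<gamma> + G \<gamma>) = (\<lambda>\<gamma>. ebd n k j m F \<gamma> + ebd n k j m (G::'a::field tpoly) \<gamma>)"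
  by (rule ext) (simp only: ebd_alt distrib_left)
lemma ebd_diff: "ebd n k j m (\<lambda>\<gamma>. F \<gamma> - G \<gamma>) = (\<lambda>\<gamma>. ebd n k j m F \<gamma> - ebd n k j m (G::'a::field tpoly) \<gamma>)"
  by (rule ext) (simp only: ebd_alt right_diff_distrib)
lemma ebd_smul: "ebd n k j m (\<lambda>\<gamma>. c * F \<gamma>) = (\<lambda>\<gamma>. c * ebd n k j m (F::'a::field tpoly) \<gamma>)"
  by (rule ext) (simp only: ebd_alt ac_simps)
lemma ebd_zero: "ebd n k j m (\<lambda>\<gamma>. 0::'a::field) = (\<lambda>\<gamma>. 0)"
  by (rule ext) (simp add: ebd_def)

lemma ebd_0: "ebd n k j 0 h = ebd n k k 0 h"
  by (simp add: ebd_def shp_def)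

lemma pmul_ebd:
  fixes f g :: "'a::field tpoly"
  assumes jk: "j \<noteq> k" and kn: "k < n"
  shows "pmul n (ebd n k j m f) (ebd n k j m' g) = ebd n k j (m + m') (pmul 1 f g)"
proof (rule ext)
  fix \<gamma>
  let ?I = "idx CHAR('a) n"
  let ?F = "ebd n k j m f" and ?G = "ebd n k j m' g"
  let ?X = "\<lambda>\<alpha>. if (\<forall>l. \<alpha> l \<le> \<gamma> l) then ?F \<alpha> * ?G (\<lambda>l. \<gamma> l - \<alpha> l) else 0"
  show "pmul n ?F ?G \<gamma> = ebd n k j (m + m') (pmul 1 f g) \<gamma>"
  proof (cases "\<gamma> \<in> ?I")
    case False thus ?thesis by (simp add: pmul_out ebd_def)
  next
    case gI: True
    have gk: "\<gamma> k < CHAR('a)" using gI by (simp add: idx_def)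
    have conv: "pmul n ?F ?G \<gamma> = sum ?X ?I" by (rule pmul_conv[OF gI])
    show ?thesis
    proof (cases "shp k j (m + m') \<gamma>")
      case False
      have "?X \<alpha> = 0" if "\<alpha> \<in> ?I" for \<alpha>
      proof (rule ccontr)
        assume ne: "?X \<alpha> \<noteq> 0"
        hence le: "\<forall>l. \<alpha> l \<le> \<gamma> l" and F: "?F \<alpha> \<noteq> 0" and G: "?G (\<lambda>l. \<gamma> l - \<alpha> l) \<noteq> 0"
          by (auto split: if_splits)
        from F have s1: "shp k j m \<alpha>" by (auto simp: ebd_def split: if_splits)
        from G have s2: "shp k j m' (\<lambda>l. \<gamma> l - \<alpha> l)" by (auto simp: ebd_def split: if_splits)
        have "shp k j (m + m') \<gamma>" unfolding shp_def
        proof (intro allI impI)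
          fix l assume "l \<noteq> k"
          hence "\<alpha> l = (if l = j then m else 0)" "\<gamma> l - \<alpha> l = (if l = j then m' else 0)"
            using s1 s2 unfolding shp_def by auto
          thus "\<gamma> l = (if l = j then m + m' else 0)"
            using le[rule_format, of l] by (cases "l = j") auto
        qed
        with False show False by simp
      qed
      hence "sum ?X ?I = 0" by (intro sum.neutral) auto
      thus ?thesis using conv False by (simp add: ebd_def)
    next
      case sh: True
      define e where "e = (\<lambda>a l. if l = k then a else if l = j then m else (0::nat))"
      have gj: "\<gamma> j = m + m'" using sh jk by (simp add: shp_def)
      have eI: "e a \<in> ?I" if "a \<le> \<gamma> k" for a
      proof -
        have "\<gamma> j < CHAR('a)" using gI by (simp add: idx_def)
        moreover have "j \<ge> n \<Longrightarrow> \<gamma> j = 0" using gI by (simp add: idx_def)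
        ultimately show ?thesis using that gk gj kn unfolding e_def idx_def by auto
      qed
      have einj: "inj_on e {..\<gamma> k}"
        by (rule inj_onI) (metis e_def)
      have zero: "?X \<alpha> = 0" if "\<alpha> \<in> ?I" "\<alpha> \<notin> e ` {..\<gamma> k}" for \<alpha>
      proof (rule ccontr)
        assume ne: "?X \<alpha> \<noteq> 0"
        hence le: "\<forall>l. \<alpha> l \<le> \<gamma> l" and F: "?F \<alpha> \<noteq> 0"
          by (auto split: if_splits)
        from F have s1: "shp k j m \<alpha>" by (auto simp: ebd_def split: if_splits)
        have "\<alpha> = e (\<alpha> k)" using s1 unfolding e_def shp_def by (intro ext) auto
        moreover have "\<alpha> k \<in> {..\<gamma> k}" using le by auto
        ultimately show False using that(2) by blast
      qed
      have "sum ?X ?I = sum (?X \<circ> e) {..\<gamma> k}"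
        by (rule sum_reindex_supp[OF finite_idx einj]) (use eI zero in auto)
      also have "\<dots> = (\<Sum>a\<le>\<gamma> k. f (mono1 a) * g (mono1 (\<gamma> k - a)))"
      proof (rule sum.cong[OF refl])
        fix a assume a: "a \<in> {..\<gamma> k}"
        have le: "\<forall>l. e a l \<le> \<gamma> l" using a gj unfolding e_def by auto
        have Fe: "?F (e a) = f (mono1 a)"
          using eI[of a] a jk unfolding ebd_def shp_def e_def by auto
        have dI: "(\<lambda>l. \<gamma> l - e a l) \<in> ?I" by (rule diff_idx[OF gI])
        have ds: "shp k j m' (\<lambda>l. \<gamma> l - e a l)"
          using sh gj unfolding shp_def e_def by auto
        have Ge: "?G (\<lambda>l. \<gamma> l - e a l) = g (mono1 (\<gamma> k - a))"
          using dI ds unfolding ebd_def by (simp add: e_def)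
        show "(?X \<circ> e) a = f (mono1 a) * g (mono1 (\<gamma> k - a))"
          using le Fe Ge by simp
      qed
      also have "\<dots> = pmul 1 f g (mono1 (\<gamma> k))" by (rule pmul1_pt[OF gk, symmetric])
      finally show ?thesis using conv gI sh by (simp add: ebd_def)
    qed
  qed
qed


lemma upd_idx: "\<beta> \<in> idx p n \<Longrightarrow> k < n \<Longrightarrow> \<beta>(k := x) \<in> idx p n \<longleftrightarrow> x < p"
  unfolding idx_def by auto

lemma upd_idx_out: "k \<ge> n \<Longrightarrow> \<beta>(k := Suc x) \<notin> idx p n"
  unfolding idx_def by auto

lemma shp_upd_k[simp]: "shp k j m (\<beta>(k := x)) = shp k j m \<beta>"
  unfolding shp_def by auto

lemma pd_ebd_k:
  fixes f :: "'a::field tpoly"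
  assumes kn: "k < n"
  shows "pd n k (ebd n k j m f) = ebd n k j m (pd 1 0 f)"
proof (rule ext)
  fix \<beta>
  show "pd n k (ebd n k j m f) \<beta> = ebd n k j m (pd 1 0 f) \<beta>"
  proof (cases "\<beta> \<in> idx CHAR('a) n")
    case False thus ?thesis by (simp add: pd_def ebd_def)
  next
    case True
    have bk: "\<beta> k < CHAR('a)" using True by (simp add: idx_def)
    show ?thesis
      using True bk upd_idx[OF True kn, of "Suc (\<beta> k)"]
      by (simp add: pd_def ebd_def pd1_pt[OF bk] del: One_nat_def)
  qed
qed

lemma pd_ebd_j:
  fixes f :: "'a::field tpoly"
  assumes jk: "j \<noteq> k" and jn: "j < n" and p1: "1 < CHAR('a)"
  shows "pd n j (ebd n k j 1 f) = ebd n k j 0 f"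
proof (rule ext)
  fix \<beta>
  show "pd n j (ebd n k j 1 f) \<beta> = ebd n k j 0 f \<beta>"
  proof (cases "\<beta> \<in> idx CHAR('a) n")
    case False thus ?thesis by (simp add: pd_def ebd_def)
  next
    case True
    have sh: "shp k j 1 (\<beta>(j := Suc (\<beta> j))) \<longleftrightarrow> shp k j 0 \<beta>"
      using jk unfolding shp_def
    proof (intro iffI allI impI)
      fix l assume H: "\<forall>l. l \<noteq> k \<longrightarrow> (\<beta>(j := Suc (\<beta> j))) l = (if l = j then 1 else 0)" and lk: "l \<noteq> k"
      show "\<beta> l = (if l = j then 0 else 0)"
        using H[rule_format, OF lk] by (cases "l = j") auto
    next
      fix l assume H: "\<forall>l. l \<noteq> k \<longrightarrow> \<beta> l = (if l = j then 0 else 0)" and lk: "l \<noteq> k"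
      show "(\<beta>(j := Suc (\<beta> j))) l = (if l = j then 1 else 0)"
        using H[rule_format, OF lk] H[rule_format, of j] jk by (cases "l = j") auto
    qed
    have sh0: "shp k j 0 \<beta> \<Longrightarrow> \<beta> j = 0" using jk unfolding shp_def by auto
    show ?thesis
      using True upd_idx[OF True jn, of "Suc (\<beta> j)"] sh sh0 p1 jk
      by (auto simp add: pd_def ebd_def)
  qed
qed

lemma pd_ebd_other:
  fixes f :: "'a::field tpoly"
  assumes "l \<noteq> k" "l \<noteq> j"
  shows "pd n l (ebd n k j m f) = (\<lambda>_. 0)"
proof (rule ext)
  fix \<beta>
  have "\<not> shp k j m (\<beta>(l := Suc (\<beta> l)))" using assms unfolding shp_def by auto
  thus "pd n l (ebd n k j m f) \<beta> = 0" by (simp add: pd_def ebd_def)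
qed

lemma xmon1_pt: "xmon 1 (mono1 a) (mono1 c) = (if c = a \<and> a < CHAR('a) then 1 else (0::'a::field))"
  by (auto simp: xmon_def)

lemma xmon_ebd:
  assumes kn: "k < n"
  shows "xmon n (\<lambda>l. if l = k then a else if l = j then m else 0) = ebd n k j m (xmon 1 (mono1 a) :: 'a::field tpoly)"
proof (rule ext)
  fix \<gamma>
  let ?e = "\<lambda>l. if l = k then a else if l = j then m else (0::nat)"
  have eq: "\<gamma> = ?e \<longleftrightarrow> shp k j m \<gamma> \<and> \<gamma> k = a"
    unfolding shp_def by (auto simp: fun_eq_iff)
  have a: "\<gamma> \<in> idx CHAR('a) n \<Longrightarrow> \<gamma> k < CHAR('a)" by (simp add: idx_def)
  have b: "?e \<in> idx CHAR('a) n \<Longrightarrow> a < CHAR('a)" using kn by (simp add: idx_def) (metis)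
  show "(xmon n ?e :: 'a tpoly) \<gamma> = ebd n k j m (xmon 1 (mono1 a)) \<gamma>"
    unfolding xmon_def ebd_def xmon1_pt using eq a b by auto
qed

lemma eps_mono1: "eps 0 = mono1 1" by (auto simp: eps_def mono1_def)

lemma xvar_ebd_j:
  assumes "j \<noteq> k" "k < n"
  shows "xvar n j = ebd n k j 1 (one1 :: 'a::field tpoly)"
proof -
  have e: "eps j = (\<lambda>l. if l = k then 0 else if l = j then 1 else 0)"
    using assms by (auto simp: eps_def)
  show ?thesis unfolding xvar_def one1_def e by (rule xmon_ebd[OF assms(2)])
qed

lemma xvar_ebd_k:
  assumes "k < n"
  shows "xvar n k = ebd n k k 0 (xvar 1 0 :: 'a::field tpoly)"
proof -
  have e: "eps k = (\<lambda>l. if l = k then 1 else if l = k then 0 else 0)"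
    by (auto simp: eps_def)
  show ?thesis unfolding xvar_def eps_mono1 e by (rule xmon_ebd[OF assms])
qed


declare One_nat_def [simp del]

lemma leib_seq:
  fixes F G :: "nat \<Rightarrow> 'a::comm_ring_1"
  shows "(\<Sum>a\<le>c. of_nat (a+1) * F (a+1) * G (c-a)) + (\<Sum>a\<le>c. F a * (of_nat (c-a+1) * G (c-a+1)))
       = of_nat (c+1) * (\<Sum>a\<le>c+1. F a * G (c+1-a))"
proof -
  have 1: "(\<Sum>a\<le>c+1. of_nat a * F a * G (c+1-a)) = (\<Sum>a\<le>c. of_nat (a+1) * F (a+1) * G (c-a))"
    unfolding Suc_eq_plus1[symmetric] by (subst sum.atMost_Suc_shift) (simp del: sum.atMost_Suc)
  have 2: "(\<Sum>a\<le>c+1. of_nat (c+1-a) * F a * G (c+1-a)) = (\<Sum>a\<le>c. F a * (of_nat (c-a+1) * G (c-a+1)))"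
    unfolding Suc_eq_plus1[symmetric] by (subst sum.atMost_Suc) (simp add: Suc_diff_le mult.commute mult.left_commute del: sum.atMost_Suc)
  have "(\<Sum>a\<le>c+1. of_nat a * F a * G (c+1-a)) + (\<Sum>a\<le>c+1. of_nat (c+1-a) * F a * G (c+1-a))
      = (\<Sum>a\<le>c+1. (of_nat a + of_nat (c+1-a)) * F a * G (c+1-a))"
    by (simp only: sum.distrib[symmetric] distrib_right)
  also have "\<dots> = (\<Sum>a\<le>c+1. of_nat (c+1) * (F a * G (c+1-a)))"
  proof (rule sum.cong[OF refl])
    fix a assume "a \<in> {..c+1}"
    hence "of_nat a + of_nat (c+1-a) = (of_nat (c+1) :: 'a)" by (simp flip: of_nat_add)
    thus "(of_nat a + of_nat (c+1-a)) * F a * G (c+1-a) = of_nat (c+1) * (F a * G (c+1-a))"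
      by (simp add: mult.assoc)
  qed
  also have "\<dots> = of_nat (c+1) * (\<Sum>a\<le>c+1. F a * G (c+1-a))" by (simp only: sum_distrib_left)
  finally show ?thesis using 1 2 by simp
qed

lemma pmul_tpa1_out: "\<not> c < CHAR('a) \<Longrightarrow> pmul 1 f g (mono1 c) = (0::'a::field)"
  by (simp add: pmul_def)

lemma leibniz1:
  fixes f g :: "'a::field tpoly"
  assumes f: "f \<in> tpa 1" and g: "g \<in> tpa 1"
  shows "pd 1 0 (pmul 1 f g) = (\<lambda>\<gamma>. pmul 1 (pd 1 0 f) g \<gamma> + pmul 1 f (pd 1 0 g) \<gamma>)"
proof (rule ext1)
  show "pd 1 0 (pmul 1 f g) \<in> tpa 1" by (rule pd_tpa)
  show "(\<lambda>\<gamma>. pmul 1 (pd 1 0 f) g \<gamma> + pmul 1 f (pd 1 0 g) \<gamma>) \<in> tpa 1"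
    by (simp add: tpa_def pmul_out)
  fix c assume c: "c < CHAR('a)"
  let ?F = "\<lambda>a. f (mono1 a)" and ?G = "\<lambda>a. g (mono1 a)"
  have pdf: "pd 1 0 f (mono1 a) = of_nat (a+1) * ?F (a+1)" if "a < CHAR('a)" for a
    using pd1_pt'[OF that f] .
  have pdg: "pd 1 0 g (mono1 a) = of_nat (a+1) * ?G (a+1)" if "a < CHAR('a)" for a
    using pd1_pt'[OF that g] .
  have L: "pd 1 0 (pmul 1 f g) (mono1 c) = of_nat (c+1) * (\<Sum>a\<le>c+1. ?F a * ?G (c+1-a))"
  proof (cases "c + 1 < CHAR('a)")
    case True
    thus ?thesis using pd1_pt'[OF c pmul_tpa] pmul1_pt[OF True] by simp
  next
    case False
    hence "c + 1 = CHAR('a)" using c by simp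
    hence "of_nat (c+1) = (0::'a)" by simp
    thus ?thesis using pd1_pt'[OF c pmul_tpa] False by (simp add: pmul_tpa1_out)
  qed
  have R: "pmul 1 (pd 1 0 f) g (mono1 c) + pmul 1 f (pd 1 0 g) (mono1 c)
     = (\<Sum>a\<le>c. of_nat (a+1) * ?F (a+1) * ?G (c-a)) + (\<Sum>a\<le>c. ?F a * (of_nat (c-a+1) * ?G (c-a+1)))"
    unfolding pmul1_pt[OF c]
  proof (intro arg_cong2[where f="(+)"] sum.cong refl)
    fix a assume "a \<in> {..c}"
    hence a: "a \<le> c" by simp
    show "pd 1 0 f (mono1 a) * g (mono1 (c - a)) = of_nat (a+1) * ?F (a+1) * ?G (c-a)"
      using a c by (simp add: pdf)
    show "f (mono1 a) * pd 1 0 g (mono1 (c - a)) = ?F a * (of_nat (c-a+1) * ?G (c-a+1))"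
      using a c by (simp add: pdg)
  qed
  show "pd 1 0 (pmul 1 f g) (mono1 c) = pmul 1 (pd 1 0 f) g (mono1 c) + pmul 1 f (pd 1 0 g) (mono1 c)"
    unfolding L R leib_seq[of ?F ?G c] ..
qed

lemma one1_tpa: "one1 \<in> tpa 1"
  by (simp add: one1_def tpa_def xmon_def)

lemma xvar1_tpa: "xvar 1 0 \<in> tpa 1"
  by (simp add: xvar_def tpa_def xmon_def)

lemma pmul_one1:
  fixes h :: "'a::field tpoly"
  assumes h: "h \<in> tpa 1" and p: "0 < CHAR('a)"
  shows "pmul 1 one1 h = h"
proof (rule ext1[OF pmul_tpa h])
  fix c assume c: "c < CHAR('a)"
  have "pmul 1 one1 h (mono1 c) = (\<Sum>a\<le>c. (if a = 0 then 1 else 0) * h (mono1 (c - a)))"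
    using c by (simp add: pmul1_pt one1_pt[OF p])
  also have "\<dots> = h (mono1 c)" by (simp add: sum.atMost_shift)
  finally show "pmul 1 one1 h (mono1 c) = h (mono1 c)" .
qed

lemma pmul_one1_right: "h \<in> tpa 1 \<Longrightarrow> 0 < CHAR('a) \<Longrightarrow> pmul 1 h one1 = (h::'a::field tpoly)"
  by (subst pmul_comm) (rule pmul_one1)

lemma pd_one1: "0 < CHAR('a) \<Longrightarrow> pd 1 0 (one1::'a::field tpoly) = (\<lambda>_. 0)"
proof (rule ext1[OF pd_tpa])
  assume p: "0 < CHAR('a)"
  show "(\<lambda>_. 0) \<in> tpa 1" by (simp add: tpa_def)
  fix c assume c: "c < CHAR('a)"
  show "pd 1 0 one1 (mono1 c) = (0::'a)" by (simp add: pd1_pt'[OF c one1_tpa] one1_pt[OF p])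
qed

lemma xvar1_pt: "xvar 1 0 (mono1 c) = (if c = 1 \<and> 1 < CHAR('a) then 1 else (0::'a::field))"
  by (simp add: xvar_def eps_mono1 xmon1_pt del: One_nat_def)

lemma pd_xvar1: "1 < CHAR('a) \<Longrightarrow> pd 1 0 (xvar 1 0::'a::field tpoly) = one1"
proof (rule ext1[OF pd_tpa one1_tpa])
  assume p: "1 < CHAR('a)"
  fix c assume c: "c < CHAR('a)"
  show "pd 1 0 (xvar 1 0) (mono1 c) = (one1 (mono1 c)::'a)"
    using p by (simp add: pd1_pt'[OF c xvar1_tpa] one1_pt xvar1_pt)
qed



lemma pascal_sum:
  fixes Y :: "nat \<Rightarrow> 'a::comm_ring_1"
  shows "(\<Sum>i\<le>s. of_nat (s choose i) * (Y (Suc i) + Y i)) = (\<Sum>i\<le>Suc s. of_nat (Suc s choose i) * Y i)"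
proof -
  have A: "(\<Sum>i\<le>Suc s. of_nat (Suc s choose i) * Y i)
      = Y 0 + (\<Sum>i\<le>s. of_nat (s choose i) * Y (Suc i)) + (\<Sum>i\<le>s. of_nat (s choose Suc i) * Y (Suc i))"
    by (subst sum.atMost_Suc_shift) (simp add: distrib_right sum.distrib del: sum.atMost_Suc)
  have B: "(\<Sum>i\<le>s. of_nat (s choose i) * Y i) = (\<Sum>i\<le>Suc s. of_nat (s choose i) * Y i)"
    by (simp add: binomial_eq_0)
  also have "\<dots> = Y 0 + (\<Sum>i\<le>s. of_nat (s choose Suc i) * Y (Suc i))"
    by (subst sum.atMost_Suc_shift) (simp del: sum.atMost_Suc)
  finally have B': "(\<Sum>i\<le>s. of_nat (s choose i) * Y i) = Y 0 + (\<Sum>i\<le>s. of_nat (s choose Suc i) * Y (Suc i))" .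
  show ?thesis unfolding A distrib_left sum.distrib B' by (simp add: ac_simps)
qed

lemma binom_leib:
  fixes U S T :: "('x \<Rightarrow> 'a::comm_ring_1) \<Rightarrow> ('x \<Rightarrow> 'a)"
    and M :: "('x \<Rightarrow> 'a) \<Rightarrow> ('x \<Rightarrow> 'a) \<Rightarrow> ('x \<Rightarrow> 'a)"
  assumes leib: "\<And>a b. a \<in> C \<Longrightarrow> b \<in> C \<Longrightarrow> U (M a b) = (\<lambda>\<gamma>. M (S a) b \<gamma> + M a (T b) \<gamma>)"
    and SC: "\<And>a. a \<in> C \<Longrightarrow> S a \<in> C" and TC: "\<And>a. a \<in> C \<Longrightarrow> T a \<in> C"
    and Ulin: "\<And>(c::nat \<Rightarrow> 'a) X A. finite A \<Longrightarrow> U (\<lambda>\<gamma>. \<Sum>i\<in>A. c i * X i \<gamma>) = (\<lambda>\<gamma>. \<Sum>i\<in>A. c i * U (X i) \<gamma>)"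
    and a: "a \<in> C" and b: "b \<in> C"
  shows "(U ^^ s) (M a b) = (\<lambda>\<gamma>. \<Sum>i\<le>s. of_nat (s choose i) * M ((S ^^ i) a) ((T ^^ (s - i)) b) \<gamma>)"
proof (induction s)
  case 0
  show ?case by simp
next
  case (Suc s)
  have SiC: "(S ^^ i) a \<in> C" for i by (induction i) (simp_all add: a SC)
  have TiC: "(T ^^ i) b \<in> C" for i by (induction i) (simp_all add: b TC)
  have "(U ^^ Suc s) (M a b) = U ((U ^^ s) (M a b))" by simp
  also have "\<dots> = (\<lambda>\<gamma>. \<Sum>i\<le>s. of_nat (s choose i) * U (M ((S ^^ i) a) ((T ^^ (s - i)) b)) \<gamma>)"
    unfolding Suc.IH by (rule Ulin) simp
  also have "\<dots> = (\<lambda>\<gamma>. \<Sum>i\<le>s. of_nat (s choose i) *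
      (M ((S ^^ Suc i) a) ((T ^^ (Suc s - Suc i)) b) \<gamma> + M ((S ^^ i) a) ((T ^^ (Suc s - i)) b) \<gamma>))"
  proof (intro ext sum.cong refl)
    fix \<gamma> i assume "i \<in> {..s}"
    hence i: "i \<le> s" by simp
    have e: "Suc s - i = Suc (s - i)" using i by simp
    show "of_nat (s choose i) * U (M ((S ^^ i) a) ((T ^^ (s - i)) b)) \<gamma> =
      of_nat (s choose i) * (M ((S ^^ Suc i) a) ((T ^^ (Suc s - Suc i)) b) \<gamma> + M ((S ^^ i) a) ((T ^^ (Suc s - i)) b) \<gamma>)"
      unfolding leib[OF SiC TiC] e by simp
  qed
  also have "\<dots> = (\<lambda>\<gamma>. \<Sum>i\<le>Suc s. of_nat (Suc s choose i) * M ((S ^^ i) a) ((T ^^ (Suc s - i)) b) \<gamma>)"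
    by (rule ext, rule pascal_sum[of s "\<lambda>i. M ((S ^^ i) a) ((T ^^ (Suc s - i)) b) _", simplified mult.assoc])
  finally show ?case .
qed

lemma charp_binom:
  fixes Z :: "nat \<Rightarrow> 'a::field"
  assumes pr: "prime CHAR('a)"
  shows "(\<Sum>i\<le>CHAR('a). of_nat (CHAR('a) choose i) * Z i) = Z 0 + Z CHAR('a)"
proof -
  let ?p = "CHAR('a)"
  have p0: "?p \<noteq> 0" using pr by auto
  have "(\<Sum>i\<le>?p. of_nat (?p choose i) * Z i) = (\<Sum>i\<in>{0, ?p}. of_nat (?p choose i) * Z i)"
  proof (intro sum.mono_neutral_right ballI)
    fix i assume "i \<in> {..?p} - {0, ?p}"
    hence i: "0 < i" "i < ?p" by auto
    have "?p dvd (?p choose i)" by (rule dvd_choose_prime) (use i p0 pr in auto)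
    hence "of_nat (?p choose i) = (0::'a)" using of_nat_eq_0_iff_char_dvd by blast
    thus "of_nat (?p choose i) * Z i = 0" by simp
  qed auto
  also have "\<dots> = Z 0 + Z ?p" using p0 by simp
  finally show ?thesis .
qed

definition Tm :: "'a::field tpoly \<Rightarrow> 'a \<Rightarrow> 'a tpoly \<Rightarrow> 'a tpoly" where
  "Tm f \<mu> h = (\<lambda>\<gamma>. pmul 1 f (pd 1 0 h) \<gamma> + \<mu> * pmul 1 (pd 1 0 f) h \<gamma>)"

definition Dop :: "'a::field tpoly \<Rightarrow> 'a tpoly \<Rightarrow> 'a tpoly" where
  "Dop f h = pmul 1 f (pd 1 0 h)"

lemma Tm_tpa: "Tm f \<mu> h \<in> tpa 1"
  by (simp add: Tm_def tpa_def pmul_out)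

lemma pmul_sum_right: "pmul n (H::'a::field tpoly) (\<lambda>\<gamma>. \<Sum>i\<in>A. F i \<gamma>) = (\<lambda>\<gamma>. \<Sum>i\<in>A. pmul n H (F i) \<gamma>)"
  by (subst pmul_comm) (simp add: pmul_sum_left pmul_comm)

lemma Tm_lin: "finite A \<Longrightarrow> Tm f \<mu> (\<lambda>\<gamma>. \<Sum>i\<in>A. c i * X i \<gamma>) = (\<lambda>\<gamma>. \<Sum>i\<in>A. c i * Tm f \<mu> (X i) \<gamma>)"
proof -
  have 1: "pd 1 0 (\<lambda>\<gamma>. \<Sum>i\<in>A. c i * X i \<gamma>) = (\<lambda>\<gamma>. \<Sum>i\<in>A. c i * pd 1 0 (X i) \<gamma>)"
    by (simp add: pd_sum pd_smul)
  show ?thesis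
    unfolding Tm_def 1
    by (simp add: pmul_sum_right pmul_smul_right sum.distrib distrib_left sum_distrib_left ac_simps)
qed

lemma Tm_zero: "Tm f \<mu> (\<lambda>_. 0) = (\<lambda>_. 0)"
  by (simp add: Tm_def pd_zero pmul_zero_right pmul_zero_left)

lemma Tm_leib:
  fixes f h k :: "'a::field tpoly"
  assumes f: "f \<in> tpa 1" and h: "h \<in> tpa 1" and k: "k \<in> tpa 1"
  shows "Tm f (\<mu> + \<nu>) (pmul 1 h k) = (\<lambda>\<gamma>. pmul 1 (Tm f \<mu> h) k \<gamma> + pmul 1 h (Tm f \<nu> k) \<gamma>)"
proof -
  let ?f' = "pd 1 0 f" and ?h' = "pd 1 0 h" and ?k' = "pd 1 0 k"
  have L: "pd 1 0 (pmul 1 h k) = (\<lambda>\<gamma>. pmul 1 ?h' k \<gamma> + pmul 1 h ?k' \<gamma>)" by (rule leibniz1[OF h k])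
  have a1: "pmul 1 f (pmul 1 ?h' k) = pmul 1 (pmul 1 f ?h') k" by (simp add: pmul_assoc)
  have a2: "pmul 1 f (pmul 1 h ?k') = pmul 1 h (pmul 1 f ?k')"
    by (metis pmul_assoc pmul_comm)
  have a3: "pmul 1 ?f' (pmul 1 h k) = pmul 1 (pmul 1 ?f' h) k" by (simp add: pmul_assoc)
  have a4: "pmul 1 ?f' (pmul 1 h k) = pmul 1 h (pmul 1 ?f' k)"
    by (metis pmul_assoc pmul_comm)
  show ?thesis
  proof (rule ext)
    fix \<gamma>
    have "Tm f (\<mu> + \<nu>) (pmul 1 h k) \<gamma> = pmul 1 f (pmul 1 ?h' k) \<gamma> + pmul 1 f (pmul 1 h ?k') \<gamma>
        + \<mu> * pmul 1 ?f' (pmul 1 h k) \<gamma> + \<nu> * pmul 1 ?f' (pmul 1 h k) \<gamma>"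
      unfolding Tm_def L pmul_add_right by (simp add: algebra_simps)
    also have "\<dots> = pmul 1 (pmul 1 f ?h') k \<gamma> + pmul 1 h (pmul 1 f ?k') \<gamma>
        + \<mu> * pmul 1 (pmul 1 ?f' h) k \<gamma> + \<nu> * pmul 1 h (pmul 1 ?f' k) \<gamma>"
      using a1 a2 a3 a4 by simp
    also have "\<dots> = pmul 1 (Tm f \<mu> h) k \<gamma> + pmul 1 h (Tm f \<nu> k) \<gamma>"
      unfolding Tm_def pmul_add_left pmul_add_right pmul_smul_left pmul_smul_right by simp
    finally show "Tm f (\<mu> + \<nu>) (pmul 1 h k) \<gamma> = pmul 1 (Tm f \<mu> h) k \<gamma> + pmul 1 h (Tm f \<nu> k) \<gamma>" .
  qed
qed



lemma Tm_pow_tpa: "h \<in> tpa 1 \<Longrightarrow> (Tm f \<mu> ^^ i) h \<in> tpa 1"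
  by (cases i) (simp_all add: Tm_tpa)

lemma Dop_pow_tpa: "h \<in> tpa 1 \<Longrightarrow> (Dop f ^^ i) h \<in> tpa 1"
  by (cases i) (simp_all add: Dop_def pmul_tpa)

lemma phi_add:
  fixes f :: "'a::field tpoly"
  assumes f: "f \<in> tpa 1" and pr: "prime CHAR('a)"
  shows "(Tm f (\<mu> + \<nu>) ^^ CHAR('a)) one1 = (\<lambda>\<gamma>. (Tm f \<mu> ^^ CHAR('a)) one1 \<gamma> + (Tm f \<nu> ^^ CHAR('a)) one1 \<gamma>)"
proof -
  let ?p = "CHAR('a)"
  have p0: "0 < ?p" using pr prime_gt_0_nat by blast
  have "(Tm f (\<mu> + \<nu>) ^^ ?p) one1 = (Tm f (\<mu> + \<nu>) ^^ ?p) (pmul 1 one1 one1)"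
    by (simp add: pmul_one1[OF one1_tpa p0])
  also have "\<dots> = (\<lambda>\<gamma>. \<Sum>i\<le>?p. of_nat (?p choose i) * pmul 1 ((Tm f \<mu> ^^ i) one1) ((Tm f \<nu> ^^ (?p - i)) one1) \<gamma>)"
    by (rule binom_leib[where C="tpa 1"])
       (auto simp: Tm_leib[OF f] Tm_tpa Tm_lin one1_tpa)
  also have "\<dots> = (\<lambda>\<gamma>. pmul 1 one1 ((Tm f \<nu> ^^ ?p) one1) \<gamma> + pmul 1 ((Tm f \<mu> ^^ ?p) one1) one1 \<gamma>)"
    by (rule ext, subst charp_binom[OF pr]) simp
  also have "\<dots> = (\<lambda>\<gamma>. (Tm f \<mu> ^^ ?p) one1 \<gamma> + (Tm f \<nu> ^^ ?p) one1 \<gamma>)"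
    by (simp add: pmul_one1[OF Tm_pow_tpa[OF one1_tpa] p0] pmul_one1_right[OF Tm_pow_tpa[OF one1_tpa] p0] add.commute)
  finally show ?thesis .
qed

lemma phi_zero:
  fixes f :: "'a::field tpoly"
  assumes p0: "0 < CHAR('a)"
  shows "(Tm f 0 ^^ CHAR('a)) one1 = (\<lambda>_. 0)"
proof -
  obtain q where q: "CHAR('a) = Suc q" using p0 by (cases "CHAR('a)") auto
  have z: "(Tm f 0 ^^ i) (\<lambda>_. 0) = (\<lambda>_. 0)" for i by (induction i) (simp_all add: Tm_zero)
  have "Tm f 0 one1 = (\<lambda>_. 0)" by (simp add: Tm_def pd_one1[OF p0] pmul_zero_right)
  thus ?thesis unfolding q funpow_Suc_right o_def using z by simp
qed

lemma phi_nat: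
  fixes f :: "'a::field tpoly"
  assumes f: "f \<in> tpa 1" and pr: "prime CHAR('a)"
  shows "(Tm f (of_nat m) ^^ CHAR('a)) one1 = (\<lambda>\<gamma>. of_nat m * (Tm f 1 ^^ CHAR('a)) one1 \<gamma>)"
proof (induction m)
  case 0
  have p0: "0 < CHAR('a)" using pr prime_gt_0_nat by blast
  show ?case using phi_zero[OF p0] by simp
next
  case (Suc m)
  show ?case unfolding of_nat_Suc phi_add[OF f pr] Suc.IH by (simp add: algebra_simps)
qed

lemma Tm1:
  fixes f :: "'a::field tpoly"
  assumes f: "f \<in> tpa 1" and h: "h \<in> tpa 1"
  shows "Tm f 1 h = pd 1 0 (pmul 1 f h)"
  unfolding leibniz1[OF f h] Tm_def by (rule ext) simp

lemma Tm1_iter: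
  fixes f :: "'a::field tpoly"
  assumes f: "f \<in> tpa 1" and h: "h \<in> tpa 1"
  shows "(Tm f 1 ^^ Suc s) h = pd 1 0 ((Dop f ^^ s) (pmul 1 f h))"
proof (induction s)
  case 0 thus ?case by (simp add: Tm1[OF f h])
next
  case (Suc s)
  have "(Tm f 1 ^^ Suc (Suc s)) h = Tm f 1 ((Tm f 1 ^^ Suc s) h)" by simp
  also have "\<dots> = Tm f 1 (pd 1 0 ((Dop f ^^ s) (pmul 1 f h)))" by (simp only: Suc.IH)
  also have "\<dots> = pd 1 0 (pmul 1 f (pd 1 0 ((Dop f ^^ s) (pmul 1 f h))))"
    by (rule Tm1[OF f pd_tpa])
  also have "\<dots> = pd 1 0 ((Dop f ^^ Suc s) (pmul 1 f h))" by (simp add: Dop_def)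
  finally show ?case .
qed

lemma phi_one:
  fixes f :: "'a::field tpoly"
  assumes f: "f \<in> tpa 1" and p1: "1 < CHAR('a)"
  shows "(Tm f 1 ^^ CHAR('a)) one1 = pd 1 0 ((Dop f ^^ CHAR('a)) (xvar 1 0))"
proof -
  obtain q where q: "CHAR('a) = Suc q" using p1 by (cases "CHAR('a)") auto
  have p0: "0 < CHAR('a)" using p1 by simp
  have "Dop f (xvar 1 0) = f"
    unfolding Dop_def pd_xvar1[OF p1] by (rule pmul_one1_right[OF f p0])
  moreover have "pmul 1 f one1 = f" by (rule pmul_one1_right[OF f p0])
  moreover have "(Dop f ^^ Suc q) (xvar 1 0) = (Dop f ^^ q) (Dop f (xvar 1 0))"
    by (simp only: funpow_Suc_right o_def)
  ultimately show ?thesis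
    unfolding q Tm1_iter[OF f one1_tpa] by simp
qed

lemma phi_lam:
  fixes f :: "'a::field tpoly"
  assumes f: "f \<in> tpa 1" and pr: "prime CHAR('a)" and lam: "lam = of_nat m"
  shows "(Tm f lam ^^ CHAR('a)) one1 = (\<lambda>\<gamma>. lam * pd 1 0 ((Dop f ^^ CHAR('a)) (xvar 1 0)) \<gamma>)"
proof -
  have p1: "1 < CHAR('a)" using pr prime_gt_1_nat by blast
  show ?thesis unfolding lam phi_nat[OF f pr] phi_one[OF f p1] ..
qed



definition Gm :: "nat \<Rightarrow> nat \<Rightarrow> nat set \<Rightarrow> 'a::field \<Rightarrow> 'a tpoly \<Rightarrow> 'a wder" where
  "Gm n k J lam f = (\<lambda>l. if l = k then ebd n k k 0 f
      else if l \<in> J then psmul lam (ebd n k l 1 (pd 1 0 f)) else pzero)"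

lemma wact_single:
  assumes kn: "k < n" and z: "\<And>l. l < n \<Longrightarrow> l \<noteq> k \<Longrightarrow> pmul n (D l) (pd n l h) = (\<lambda>_. 0::'a::field)"
  shows "wact n D h = pmul n (D k) (pd n k h)"
proof (rule ext)
  fix \<gamma>
  have "(\<Sum>i<n. pmul n (D i) (pd n i h) \<gamma>) = (\<Sum>i\<in>{k}. pmul n (D i) (pd n i h) \<gamma>)"
    by (rule sum.mono_neutral_right) (use kn z in \<open>auto simp: fun_eq_iff\<close>)
  thus "wact n D h \<gamma> = pmul n (D k) (pd n k h) \<gamma>" by (simp add: wact_def)
qed

lemma wact_two:
  assumes kn: "k < n" and jn: "j < n" and jk: "j \<noteq> k"
    and z: "\<And>l. l < n \<Longrightarrow> l \<noteq> k \<Longrightarrow> l \<noteq> j \<Longrightarrow> pmul n (D l) (pd n l h) = (\<lambda>_. 0::'a::field)"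
  shows "wact n D h = (\<lambda>\<gamma>. pmul n (D k) (pd n k h) \<gamma> + pmul n (D j) (pd n j h) \<gamma>)"
proof (rule ext)
  fix \<gamma>
  have "(\<Sum>i<n. pmul n (D i) (pd n i h) \<gamma>) = (\<Sum>i\<in>{k, j}. pmul n (D i) (pd n i h) \<gamma>)"
    by (rule sum.mono_neutral_right) (use kn jn z in \<open>auto simp: fun_eq_iff\<close>)
  thus "wact n D h \<gamma> = pmul n (D k) (pd n k h) \<gamma> + pmul n (D j) (pd n j h) \<gamma>"
    using jk by (simp add: wact_def)
qed

lemma wact_zero: "wact n D (\<lambda>_. 0::'a::field) = (\<lambda>_. 0)"
  by (rule ext) (simp add: wact_def pd_zero pmul_zero_right)

lemma wact_smul: "wact n D (\<lambda>\<gamma>. c * h \<gamma>) = (\<lambda>\<gamma>. c * wact n D (h::'a::field tpoly) \<gamma>)"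
  by (rule ext) (simp add: wact_def pd_smul pmul_smul_right sum_distrib_left)

lemma ebd_0': "j \<noteq> k \<Longrightarrow> ebd n k j 0 h = ebd n k k 0 h"
  by (rule ebd_0)

lemma pmul_iota:
  fixes f g :: "'a::field tpoly"
  assumes kn: "k < n"
  shows "pmul n (ebd n k k 0 f) (ebd n k k 0 g) = ebd n k k 0 (pmul 1 f g)"
proof -
  have "pmul n (ebd n k (Suc k) 0 f) (ebd n k (Suc k) 0 g) = ebd n k (Suc k) (0+0) (pmul 1 f g)"
    by (rule pmul_ebd) (use kn in auto)
  thus ?thesis by (simp add: ebd_0')
qed

context
  fixes n k :: nat and J :: "nat set" and lam :: "'a::field"
  assumes kn: "k < n" and Jn: "J \<subseteq> {..<n}" and kJ: "k \<notin> J" and p1: "1 < CHAR('a)"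
begin

lemma Gm_out: "l \<ge> n \<Longrightarrow> Gm n k J lam f l = pzero"
  using kn Jn by (auto simp: Gm_def)

lemma Gm_other: "l \<noteq> k \<Longrightarrow> l \<notin> J \<Longrightarrow> Gm n k J lam f l = pzero"
  by (simp add: Gm_def)

lemma Gm_Wn: "Gm n k J lam f \<in> Wn n"
  unfolding Wn_def using Gm_out by (auto simp: Gm_def ebd_tpa psmul_def tpa_def pzero_def ebd_def)

lemma wact_Gm_iota:
  shows "wact n (Gm n k J lam f) (ebd n k k 0 h) = ebd n k k 0 (pmul 1 f (pd 1 0 h))"
proof -
  have "wact n (Gm n k J lam f) (ebd n k k 0 h) = pmul n (Gm n k J lam f k) (pd n k (ebd n k k 0 h))"
    by (rule wact_single[OF kn]) (simp add: pd_ebd_other pmul_zero_right)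
  also have "\<dots> = pmul n (ebd n k k 0 f) (pd n k (ebd n k k 0 h))" by (simp add: Gm_def)
  also have "\<dots> = ebd n k k 0 (pmul 1 f (pd 1 0 h))"
    by (simp add: pd_ebd_k[OF kn] pmul_iota[OF kn])
  finally show ?thesis .
qed

lemma wact_Gm_J:
  assumes jJ: "j \<in> J"
  shows "wact n (Gm n k J lam f) (ebd n k j 1 h) = ebd n k j 1 (Tm f lam h)"
proof -
  have jn: "j < n" and jk: "j \<noteq> k" using jJ Jn kJ by auto
  have "wact n (Gm n k J lam f) (ebd n k j 1 h) =
     (\<lambda>\<gamma>. pmul n (Gm n k J lam f k) (pd n k (ebd n k j 1 h)) \<gamma>
         + pmul n (Gm n k J lam f j) (pd n j (ebd n k j 1 h)) \<gamma>)"
    by (rule wact_two[OF kn jn jk]) (simp add: pd_ebd_other pmul_zero_right)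
  also have "\<dots> = (\<lambda>\<gamma>. pmul n (ebd n k k 0 f) (pd n k (ebd n k j 1 h)) \<gamma>
         + pmul n (psmul lam (ebd n k j 1 (pd 1 0 f))) (pd n j (ebd n k j 1 h)) \<gamma>)"
    using jJ jk by (simp add: Gm_def)
  also have "\<dots> = (\<lambda>\<gamma>. ebd n k j 1 (pmul 1 f (pd 1 0 h)) \<gamma> + lam * ebd n k j 1 (pmul 1 (pd 1 0 f) h) \<gamma>)"
  proof -
    have 1: "pmul n (ebd n k k 0 f) (pd n k (ebd n k j 1 h)) = ebd n k j 1 (pmul 1 f (pd 1 0 h))"
      using pmul_ebd[OF jk kn, of 0 f 1 "pd 1 0 h"] jk by (simp add: pd_ebd_k[OF kn] ebd_0')
    have 2: "pmul n (ebd n k j 1 (pd 1 0 f)) (pd n j (ebd n k j 1 h)) = ebd n k j 1 (pmul 1 (pd 1 0 f) h)"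
      using pmul_ebd[OF jk kn, of 1 "pd 1 0 f" 0 h] by (simp add: pd_ebd_j[OF jk jn p1])
    show ?thesis unfolding 1 psmul_def pmul_smul_left 2 ..
  qed
  also have "\<dots> = ebd n k j 1 (Tm f lam h)"
    unfolding Tm_def ebd_add ebd_smul ..
  finally show ?thesis .
qed

lemma wact_Gm_nJ:
  assumes jn: "j < n" and jk: "j \<noteq> k" and jJ: "j \<notin> J" and p0: "0 < CHAR('a)"
  shows "wact n (Gm n k J lam f) (ebd n k j 1 one1) = (\<lambda>_. 0)"
proof -
  have "wact n (Gm n k J lam f) (ebd n k j 1 one1) = pmul n (Gm n k J lam f k) (pd n k (ebd n k j 1 one1))"
  proof (rule wact_single[OF kn])
    fix l assume "l < n" "l \<noteq> k"
    show "pmul n (Gm n k J lam f l) (pd n l (ebd n k j 1 one1)) = (\<lambda>_. 0)"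
    proof (cases "l = j")
      case True thus ?thesis using jJ jk by (simp add: Gm_def pzero_def pmul_zero_left)
    next
      case False thus ?thesis using \<open>l \<noteq> k\<close> by (simp add: pd_ebd_other pmul_zero_right)
    qed
  qed
  also have "\<dots> = pmul n (ebd n k k 0 f) (pd n k (ebd n k j 1 one1))" by (simp add: Gm_def)
  also have "\<dots> = (\<lambda>_. 0)"
    by (simp add: pd_ebd_k[OF kn] pd_one1[OF p0] ebd_zero pmul_zero_right)
  finally show ?thesis .
qed

end



definition br1 :: "'a::field tpoly \<Rightarrow> 'a tpoly \<Rightarrow> 'a tpoly" where
  "br1 f g = (\<lambda>\<gamma>. pmul 1 f (pd 1 0 g) \<gamma> - pmul 1 g (pd 1 0 f) \<gamma>)"

lemma br1_tpa: "br1 f g \<in> tpa 1"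
  by (simp add: br1_def tpa_def pmul_out)

lemma wact_pzero: "wact n D pzero = (pzero::'a::field tpoly)"
  unfolding pzero_def by (rule wact_zero)

lemma Tm_diff:
  fixes f g :: "'a::field tpoly"
  assumes f: "f \<in> tpa 1" and g: "g \<in> tpa 1"
  shows "(\<lambda>\<gamma>. Tm f lam (pd 1 0 g) \<gamma> - Tm g lam (pd 1 0 f) \<gamma>) = pd 1 0 (br1 f g)"
proof -
  have 1: "pd 1 0 (pmul 1 f (pd 1 0 g)) = (\<lambda>\<gamma>. pmul 1 (pd 1 0 f) (pd 1 0 g) \<gamma> + pmul 1 f (pd 1 0 (pd 1 0 g)) \<gamma>)"
    by (rule leibniz1[OF f pd_tpa])
  have 2: "pd 1 0 (pmul 1 g (pd 1 0 f)) = (\<lambda>\<gamma>. pmul 1 (pd 1 0 g) (pd 1 0 f) \<gamma> + pmul 1 g (pd 1 0 (pd 1 0 f)) \<gamma>)"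
    by (rule leibniz1[OF g pd_tpa])
  have c: "pmul 1 (pd 1 0 g) (pd 1 0 f) = pmul 1 (pd 1 0 f) (pd 1 0 (g::'a tpoly))" by (rule pmul_comm)
  show ?thesis
    unfolding br1_def pd_diff 1 2 Tm_def c by (rule ext) (simp add: algebra_simps)
qed

lemma Gm_pt: "\<exists>A B. \<forall>f. Gm n k J lam f l \<gamma> = A * (f::'a::field tpoly) B"
proof (cases "l = k")
  case True thus ?thesis
    by (intro exI[of _ "if \<gamma> \<in> idx CHAR('a) n \<and> shp k k 0 \<gamma> then 1 else 0"] exI[of _ "mono1 (\<gamma> k)"])
       (simp add: Gm_def ebd_alt)
next
  case False
  show ?thesis
  proof (cases "l \<in> J")
    case True
    thus ?thesis using False unfolding Gm_def psmul_def ebd_alt pd_alt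
      by (intro exI[of _ "lam * ((if \<gamma> \<in> idx CHAR('a) n \<and> shp k l 1 \<gamma> then 1 else 0) *
        (if mono1 (\<gamma> k) \<in> idx CHAR('a) 1 \<and> (mono1 (\<gamma> k))(0 := Suc (mono1 (\<gamma> k) 0)) \<in> idx CHAR('a) 1 then of_nat (Suc (mono1 (\<gamma> k) 0)) else 0))"]
          exI[of _ "(mono1 (\<gamma> k))(0 := Suc (mono1 (\<gamma> k) 0))"]) (simp add: ac_simps)
  next
    case False2: False
    thus ?thesis using False by (intro exI[of _ 0]) (simp add: Gm_def pzero_def)
  qed
qed

lemma tpa1_decomp:
  fixes f :: "'a::field tpoly"
  assumes f: "f \<in> tpa 1"
  shows "(\<Sum>i<CHAR('a). f (mono1 i) * xmon 1 (mono1 i) B) = f B"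
proof (cases "B \<in> idx CHAR('a) 1")
  case True
  hence B: "B = mono1 (B 0)" "B 0 < CHAR('a)" by (rule idx1_eq, simp add: idx_def)
  have "(\<Sum>i<CHAR('a). f (mono1 i) * xmon 1 (mono1 i) B) = (\<Sum>i<CHAR('a). if i = B 0 then f (mono1 i) else 0)"
    by (rule sum.cong[OF refl], subst B(1)) (auto simp: xmon1_pt)
  also have "\<dots> = f B" using B by simp
  finally show ?thesis .
next
  case False
  have "xmon 1 (mono1 i) B = (0::'a)" if "i < CHAR('a)" for i
    using False that by (auto simp: xmon_def)
  hence "(\<Sum>i<CHAR('a). f (mono1 i) * xmon 1 (mono1 i) B) = 0" by (intro sum.neutral) auto
  thus ?thesis using f False by (simp add: tpa_def)
qed

lemma theta_Gm:
  fixes img :: "nat \<Rightarrow> 'a::field wder"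
  assumes img: "\<And>i. i < CHAR('a) \<Longrightarrow> img i = Gm n k J lam (xmon 1 (mono1 i))"
    and D: "D 0 \<in> tpa 1"
  shows "theta img D = Gm n k J lam (D 0)"
proof (intro ext)
  fix l \<gamma>
  obtain A B where AB: "\<And>f. Gm n k J lam f l \<gamma> = A * (f::'a tpoly) B" using Gm_pt by blast
  have m: "(\<lambda>k. if k = 0 then i else 0) = mono1 i" for i by (simp add: mono1_def)
  have "theta img D l \<gamma> = (\<Sum>i<CHAR('a). D 0 (mono1 i) * img i l \<gamma>)"
    by (simp add: theta_def m)
  also have "\<dots> = (\<Sum>i<CHAR('a). D 0 (mono1 i) * (A * xmon 1 (mono1 i) B))"
    by (rule sum.cong[OF refl]) (simp add: img AB)
  also have "\<dots> = A * (\<Sum>i<CHAR('a). D 0 (mono1 i) * xmon 1 (mono1 i) B)"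
    by (simp add: sum_distrib_left ac_simps)
  also have "\<dots> = Gm n k J lam (D 0) l \<gamma>" by (simp add: tpa1_decomp[OF D] AB)
  finally show "theta img D l \<gamma> = Gm n k J lam (D 0) l \<gamma>" .
qed

context
  fixes n k :: nat and J :: "nat set" and lam :: "'a::field"
  assumes kn: "k < n" and Jn: "J \<subseteq> {..<n}" and kJ: "k \<notin> J" and p1: "1 < CHAR('a)"
begin

lemma Gm_bracket:
  fixes f g :: "'a tpoly"
  assumes f: "f \<in> tpa 1" and g: "g \<in> tpa 1"
  shows "wbr n (Gm n k J lam f) (Gm n k J lam g) = Gm n k J lam (br1 f g)"
proof (rule ext)
  fix l
  show "wbr n (Gm n k J lam f) (Gm n k J lam g) l = Gm n k J lam (br1 f g) l"
  proof (cases "l < n")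
    case False thus ?thesis using Gm_out[OF kn Jn kJ p1] by (simp add: wbr_def)
  next
    case ln: True
    show ?thesis
    proof (cases "l = k")
      case True
      have "wact n (Gm n k J lam f) (Gm n k J lam g l) = ebd n k k 0 (pmul 1 f (pd 1 0 g))"
        using True wact_Gm_iota[OF kn Jn kJ p1] by (simp add: Gm_def)
      moreover have "wact n (Gm n k J lam g) (Gm n k J lam f l) = ebd n k k 0 (pmul 1 g (pd 1 0 f))"
        using True wact_Gm_iota[OF kn Jn kJ p1] by (simp add: Gm_def)
      ultimately show ?thesis using ln True
        by (simp add: wbr_def Gm_def br1_def ebd_diff)
    next
      case lk: False
      show ?thesis
      proof (cases "l \<in> J")
        case True
        have "wact n (Gm n k J lam f) (Gm n k J lam g l) = (\<lambda>\<gamma>. lam * ebd n k l 1 (Tm f lam (pd 1 0 g)) \<gamma>)"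
          using True lk wact_Gm_J[OF kn Jn kJ p1 True] by (simp add: Gm_def psmul_def wact_smul)
        moreover have "wact n (Gm n k J lam g) (Gm n k J lam f l) = (\<lambda>\<gamma>. lam * ebd n k l 1 (Tm g lam (pd 1 0 f)) \<gamma>)"
          using True lk wact_Gm_J[OF kn Jn kJ p1 True] by (simp add: Gm_def psmul_def wact_smul)
        moreover have "ebd n k l 1 (pd 1 0 (br1 f g)) = (\<lambda>\<gamma>. ebd n k l 1 (Tm f lam (pd 1 0 g)) \<gamma> - ebd n k l 1 (Tm g lam (pd 1 0 f)) \<gamma>)"
          unfolding Tm_diff[OF f g, where lam=lam, symmetric] ebd_diff ..
        ultimately show ?thesis using ln lk True
          by (simp add: wbr_def Gm_def psmul_def right_diff_distrib)
      next
        case False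
        thus ?thesis using ln lk by (simp add: wbr_def Gm_def wact_pzero) (simp add: pzero_def)
      qed
    qed
  qed
qed

lemma wact_iter_iota:
  "(wact n (Gm n k J lam f) ^^ s) (ebd n k k 0 h) = ebd n k k 0 ((Dop f ^^ s) h)"
  by (induction s) (simp_all add: wact_Gm_iota[OF kn Jn kJ p1] Dop_def)

lemma wact_iter_J:
  "j \<in> J \<Longrightarrow> (wact n (Gm n k J lam f) ^^ s) (ebd n k j 1 h) = ebd n k j 1 ((Tm f lam ^^ s) h)"
  by (induction s) (simp_all add: wact_Gm_J[OF kn Jn kJ p1])

lemma Gm_pow:
  fixes f :: "'a tpoly"
  assumes f: "f \<in> tpa 1" and pr: "prime CHAR('a)" and lam: "lam = of_nat m"
  shows "wpow n (Gm n k J lam f) = Gm n k J lam ((Dop f ^^ CHAR('a)) (xvar 1 0))"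
proof (rule ext)
  fix l
  let ?g = "(Dop f ^^ CHAR('a)) (xvar 1 0)"
  have p0: "0 < CHAR('a)" using p1 by simp
  show "wpow n (Gm n k J lam f) l = Gm n k J lam ?g l"
  proof (cases "l < n")
    case False thus ?thesis using Gm_out[OF kn Jn kJ p1] by (simp add: wpow_def)
  next
    case ln: True
    show ?thesis
    proof (cases "l = k")
      case True
      have "Gm n k J lam ?g k = ebd n k k 0 ?g" by (simp add: Gm_def)
      thus ?thesis using ln True by (simp add: wpow_def xvar_ebd_k[OF kn] wact_iter_iota)
    next
      case lk: False
      show ?thesis
      proof (cases "l \<in> J")
        case True
        have "(wact n (Gm n k J lam f) ^^ CHAR('a)) (xvar n l) = ebd n k l 1 ((Tm f lam ^^ CHAR('a)) one1)"
          using True lk by (simp add: xvar_ebd_j[OF lk kn] wact_iter_J)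
        also have "\<dots> = (\<lambda>\<gamma>. lam * ebd n k l 1 (pd 1 0 ?g) \<gamma>)"
          unfolding phi_lam[OF f pr lam] ebd_smul ..
        finally show ?thesis using ln lk True by (simp add: wpow_def Gm_def psmul_def)
      next
        case False
        obtain q where q: "CHAR('a) = Suc q" using p1 by (cases "CHAR('a)") auto
        have z: "(wact n (Gm n k J lam f) ^^ i) (\<lambda>_. 0) = (\<lambda>_. 0)" for i
          by (induction i) (simp_all add: wact_zero)
        have "(wact n (Gm n k J lam f) ^^ CHAR('a)) (xvar n l) = (\<lambda>_. 0)"
          unfolding q funpow_Suc_right o_def xvar_ebd_j[OF lk kn]
            wact_Gm_nJ[OF kn Jn kJ p1 ln lk False p0] z ..
        thus ?thesis using ln lk False by (simp add: wpow_def Gm_def pzero_def)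
      qed
    qed
  qed
qed

lemma Gm_inj:
  fixes f g :: "'a tpoly"
  assumes f: "f \<in> tpa 1" and g: "g \<in> tpa 1" and eq: "Gm n k J lam f = Gm n k J lam g"
  shows "f = g"
proof (rule ext1[OF f g])
  fix c assume c: "c < CHAR('a)"
  let ?\<gamma> = "\<lambda>l. if l = k then c else (0::nat)"
  have gI: "?\<gamma> \<in> idx CHAR('a) n" using c kn by (auto simp: idx_def)
  have sh: "shp k k 0 ?\<gamma>" by (simp add: shp_def)
  have "ebd n k k 0 f ?\<gamma> = ebd n k k 0 g ?\<gamma>" using fun_cong[OF eq, of k] by (simp add: Gm_def)
  thus "f (mono1 c) = g (mono1 c)" using gI sh by (simp add: ebd_def)
qed

end



lemma theta_add: "theta img (wadd D E) = wadd (theta img D) (theta img (E::'a::field wder))"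
  by (intro ext) (simp add: theta_def wadd_def padd_def distrib_right sum.distrib)

lemma theta_smul: "theta img (wsmul c D) = wsmul c (theta img (D::'a::field wder))"
  by (intro ext) (simp add: theta_def wsmul_def psmul_def sum_distrib_left ac_simps)

lemma wact1: "wact 1 D h = pmul 1 (D 0) (pd 1 0 (h::'a::field tpoly))"
  by (rule ext) (simp add: wact_def One_nat_def)

lemma wbr1_0: "wbr 1 D E 0 = br1 (D 0) (E 0 :: 'a::field tpoly)"
  by (simp add: wbr_def wact1 br1_def)

lemma wpow1_0: "wpow 1 D 0 = (Dop (D 0) ^^ CHAR('a)) (xvar 1 0 :: 'a::field tpoly)"
proof -
  have "wact 1 D = Dop (D 0)" by (rule ext) (simp add: wact1 Dop_def)
  thus ?thesis by (simp add: wpow_def)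
qed

lemma Wn1_0: "D \<in> Wn 1 \<Longrightarrow> D 0 \<in> tpa 1"
  by (simp add: Wn_def)

lemma Wn1_eq: "D \<in> Wn 1 \<Longrightarrow> E \<in> Wn 1 \<Longrightarrow> D 0 = E 0 \<Longrightarrow> D = E"
proof (rule ext)
  fix i assume D: "D \<in> Wn 1" and E: "E \<in> Wn 1" and e: "D 0 = E 0"
  show "D i = E i"
  proof (cases "i = 0")
    case True thus ?thesis using e by simp
  next
    case False
    hence "i \<ge> 1" by simp
    thus ?thesis using D E unfolding Wn_def by simp
  qed
qed

lemma inj_rhom_Gm:
  fixes img :: "nat \<Rightarrow> 'a::field wder"
  assumes kn: "k < n" and Jn: "J \<subseteq> {..<n}" and kJ: "k \<notin> J" and pr: "prime CHAR('a)"
    and lam: "lam = of_nat m"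
    and img: "\<And>i. i < CHAR('a) \<Longrightarrow> img i = Gm n k J lam (xmon 1 (mono1 i))"
    and mem: "\<And>D. D \<in> Wn 1 \<Longrightarrow> theta img D \<in> L"
  shows "inj_rhom n L (theta img)"
proof -
  have p1: "1 < CHAR('a)" using pr prime_gt_1_nat by blast
  have th: "theta img D = Gm n k J lam (D 0)" if "D 0 \<in> tpa 1" for D :: "'a wder"
    by (rule theta_Gm[where D=D]) (simp_all add: img that)
  show ?thesis
    unfolding inj_rhom_def
  proof (intro conjI ballI allI)
    fix D :: "'a wder" assume "D \<in> Wn 1" thus "theta img D \<in> L" by (rule mem)
  next
    fix D E :: "'a wder" show "theta img (wadd D E) = wadd (theta img D) (theta img E)" by (rule theta_add)
  next
    fix c and D :: "'a wder" show "theta img (wsmul c D) = wsmul c (theta img D)" by (rule theta_smul)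
  next
    fix D E :: "'a wder" assume D: "D \<in> Wn 1" and E: "E \<in> Wn 1"
    have "theta img (wbr 1 D E) = Gm n k J lam (br1 (D 0) (E 0))"
      using th[of "wbr 1 D E"] by (simp add: wbr1_0 br1_tpa)
    also have "\<dots> = wbr n (Gm n k J lam (D 0)) (Gm n k J lam (E 0))"
      by (rule Gm_bracket[OF kn Jn kJ p1 Wn1_0[OF D] Wn1_0[OF E], symmetric])
    also have "\<dots> = wbr n (theta img D) (theta img E)"
      using th[of D, OF Wn1_0[OF D]] th[of E, OF Wn1_0[OF E]] by simp
    finally show "theta img (wbr 1 D E) = wbr n (theta img D) (theta img E)" .
  next
    fix D :: "'a wder" assume D: "D \<in> Wn 1"
    have "theta img (wpow 1 D) = Gm n k J lam ((Dop (D 0) ^^ CHAR('a)) (xvar 1 0))"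
      using th[of "wpow 1 D"] by (simp add: wpow1_0 Dop_pow_tpa xvar1_tpa)
    also have "\<dots> = wpow n (Gm n k J lam (D 0))"
      by (rule Gm_pow[OF kn Jn kJ p1 Wn1_0[OF D] pr lam, symmetric])
    also have "\<dots> = wpow n (theta img D)" using th[of D, OF Wn1_0[OF D]] by simp
    finally show "theta img (wpow 1 D) = wpow n (theta img D)" .
  next
    show "inj_on (theta img) (Wn 1)"
    proof (rule inj_onI)
      fix D E :: "'a wder" assume D: "D \<in> Wn 1" and E: "E \<in> Wn 1" and eq: "theta img D = theta img E"
      have "Gm n k J lam (D 0) = Gm n k J lam (E 0)"
        using eq th[of D, OF Wn1_0[OF D]] th[of E, OF Wn1_0[OF E]] by simp
      hence "D 0 = E 0" by (rule Gm_inj[OF kn Jn kJ p1 Wn1_0[OF D] Wn1_0[OF E]])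
      thus "D = E" by (rule Wn1_eq[OF D E])
    qed
  qed
qed

lemma lspan_closed:
  assumes "X \<in> lspan A"
  shows "Y \<in> lspan A \<Longrightarrow> wadd (wsmul c X) Y \<in> lspan A"
  using assms
proof (induction arbitrary: c Y)
  case lspan_zero
  have "wadd (wsmul c wzero) Y = Y"
    by (intro ext) (simp add: wadd_def wsmul_def wzero_def padd_def psmul_def pzero_def)
  thus ?case using lspan_zero.prems by simp
next
  case (lspan_step D E d)
  have "wadd (wsmul c (wadd (wsmul d D) E)) Y = wadd (wsmul (c * d) D) (wadd (wsmul c E) Y)"
    by (intro ext) (simp add: wadd_def wsmul_def padd_def psmul_def algebra_simps)
  thus ?case using lspan_step by (simp add: lspan.lspan_step)
qed

lemma lspan_smul: "X \<in> lspan A \<Longrightarrow> wsmul c X \<in> lspan A"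
proof -
  assume X: "X \<in> lspan A"
  have "wadd (wsmul c X) wzero = wsmul c X"
    by (intro ext) (simp add: wadd_def wsmul_def wzero_def padd_def psmul_def pzero_def)
  thus ?thesis using lspan_closed[OF X lspan_zero, of c] by simp
qed

lemma lspan_single: "X \<in> A \<Longrightarrow> (X::'a::field wder) \<in> lspan A"
proof -
  assume X: "X \<in> A"
  have "wadd (wsmul 1 X) wzero = X"
    by (intro ext) (simp add: wadd_def wsmul_def wzero_def padd_def psmul_def pzero_def)
  thus ?thesis using lspan_step[OF X lspan_zero, of 1] by simp
qed

lemma theta_lspan:
  fixes img :: "nat \<Rightarrow> 'a::field wder"
  assumes img: "\<And>i. i < CHAR('a) \<Longrightarrow> img i \<in> lspan A"
  shows "theta img D \<in> lspan A"
proof -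
  have "(\<lambda>j \<gamma>. \<Sum>i<m. D 0 (\<lambda>k. if k = 0 then i else 0) * img i j \<gamma>) \<in> lspan A" if "m \<le> CHAR('a)" for m
    using that
  proof (induction m)
    case 0
    have "(\<lambda>j \<gamma>. \<Sum>i<0. D 0 (\<lambda>k. if k = 0 then i else 0) * img i j \<gamma>) = wzero"
      by (simp add: wzero_def pzero_def)
    thus ?case by (simp add: lspan_zero)
  next
    case (Suc m)
    have "(\<lambda>j \<gamma>. \<Sum>i<Suc m. D 0 (\<lambda>k. if k = 0 then i else 0) * img i j \<gamma>)
       = wadd (wsmul (D 0 (\<lambda>k. if k = 0 then m else 0)) (img m)) (\<lambda>j \<gamma>. \<Sum>i<m. D 0 (\<lambda>k. if k = 0 then i else 0) * img i j \<gamma>)"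
      by (intro ext) (simp add: wadd_def wsmul_def padd_def psmul_def add.commute)
    thus ?case using lspan_closed[OF img Suc.IH] Suc.prems by simp
  qed
  thus ?thesis unfolding theta_def by simp
qed



abbreviation xm :: "nat \<Rightarrow> 'a::field tpoly" where "xm a \<equiv> xmon 1 (mono1 a)"

lemma xm_tpa: "xm a \<in> tpa 1"
  by (simp add: tpa_def xmon_def)

lemma pmul_xm:
  assumes p0: "0 < CHAR('a)"
  shows "pmul 1 (xm a) (xm b) = (xm (a + b) :: 'a::field tpoly)"
proof (rule ext1[OF pmul_tpa xm_tpa])
  fix c assume c: "c < CHAR('a)"
  have "(pmul 1 (xm a) (xm b) (mono1 c) :: 'a) = (\<Sum>i\<le>c. (if i = a \<and> a < CHAR('a) then 1 else 0) * (if c - i = b \<and> b < CHAR('a) then 1 else (0::'a)))"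
    using c by (simp add: pmul1_pt xmon1_pt)
  also have "\<dots> = (\<Sum>i\<le>c. if i = a then (if c - a = b \<and> a < CHAR('a) \<and> b < CHAR('a) then 1 else 0) else 0)"
    by (rule sum.cong) auto
  also have "\<dots> = (if c = a + b \<and> a + b < CHAR('a) then 1 else 0)"
    using c by (auto simp: sum.delta)
  also have "\<dots> = xm (a + b) (mono1 c)" by (simp add: xmon1_pt)
  finally show "(pmul 1 (xm a) (xm b) (mono1 c) :: 'a) = xm (a + b) (mono1 c)" .
qed

lemma pd_xm_Suc: "pd 1 0 (xm (Suc b)) = (\<lambda>\<gamma>. of_nat (Suc b) * (xm b \<gamma> :: 'a::field))"
proof (rule ext1[OF pd_tpa])
  show "(\<lambda>\<gamma>. of_nat (Suc b) * (xm b \<gamma> :: 'a))  \<in> tpa 1" by (simp add: tpa_def xmon_def)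
  fix c assume c: "c < CHAR('a)"
  show "pd 1 0 (xm (Suc b)) (mono1 c) = of_nat (Suc b) * (xm b (mono1 c) :: 'a)"
  proof (cases "Suc b < CHAR('a)")
    case True thus ?thesis using c by (auto simp: pd1_pt'[OF c xm_tpa] xmon1_pt)
  next
    case False
    show ?thesis
    proof (cases "c = b")
      case True
      hence "Suc b = CHAR('a)" using False c by simp
      hence "of_nat (Suc b) = (0::'a)" by (metis of_nat_CHAR)
      moreover have e: "pd 1 0 (xm (Suc b)) (mono1 c) = of_nat (c+1) * (xm (Suc b) (mono1 (c+1)) :: 'a)"
        by (rule pd1_pt'[OF c xm_tpa])
      ultimately show ?thesis unfolding e using True by (simp add: add.commute)
    next
      case False2: False
      thus ?thesis using c False by (auto simp: pd1_pt'[OF c xm_tpa] xmon1_pt)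
    qed
  qed
qed

lemma pd_xm_0: "0 < CHAR('a) \<Longrightarrow> pd 1 0 (xm 0) = (\<lambda>_. 0::'a::field)"
  using pd_one1 by (simp add: one1_def)

lemma br1_x1:
  assumes p0: "0 < CHAR('a)"
  shows "br1 (xm 1) (xm i) = (\<lambda>\<gamma>. (of_nat i - 1) * (xm i \<gamma> :: 'a::field))"
proof -
  have d1: "pd 1 0 (xm 1) = (\<lambda>\<gamma>. 1 * (xm 0 \<gamma> :: 'a))" using pd_xm_Suc[of 0] by (simp add: One_nat_def)
  have B: "pmul 1 (xm i) (pd 1 0 (xm 1)) = (\<lambda>\<gamma>. 1 * (xm i \<gamma> :: 'a))"
    unfolding d1 pmul_smul_right pmul_xm[OF p0] by simp
  show ?thesis
  proof (cases i)
    case 0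
    thus ?thesis using p0 B
      by (simp add: br1_def pd_xm_0 pmul_zero_right)
  next
    case (Suc b)
    have A: "pmul 1 (xm 1) (pd 1 0 (xm i)) = (\<lambda>\<gamma>. of_nat i * (xm i \<gamma> :: 'a))"
      unfolding Suc pd_xm_Suc pmul_smul_right pmul_xm[OF p0] by (simp add: One_nat_def)
    show ?thesis unfolding br1_def A B by (simp add: algebra_simps)
  qed
qed

lemma br1_02:
  assumes p0: "0 < CHAR('a)"
  shows "br1 (xm 0) (xm 2) = (\<lambda>\<gamma>. 2 * (xm 1 \<gamma> :: 'a::field))"
proof -
  have d2: "pd 1 0 (xm 2) = (\<lambda>\<gamma>. 2 * (xm 1 \<gamma> :: 'a))"
    using pd_xm_Suc[of 1, where 'a='a] by (simp add: numeral_2_eq_2 One_nat_def)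
  have "pmul 1 (xm 0) (pd 1 0 (xm 2)) = (\<lambda>\<gamma>. 2 * (xm 1 \<gamma> :: 'a))"
    unfolding d2 pmul_smul_right pmul_xm[OF p0] by simp
  thus ?thesis using p0
    by (simp add: br1_def pd_xm_0 pmul_zero_right)
qed

lemma Gm_smul: "Gm n k J lam (\<lambda>\<gamma>. c * f \<gamma>) = wsmul c (Gm n k J lam (f::'a::field tpoly))"
  by (intro ext) (simp add: Gm_def wsmul_def psmul_def ebd_smul pd_smul pzero_def ac_simps)

lemma wsmul_inv: "(c::'a::field) \<noteq> 0 \<Longrightarrow> wsmul (1/c) (wsmul c X) = X"
  by (intro ext) (simp add: wsmul_def psmul_def)

lemma Gm_brackets:
  fixes T :: "'a::field wder set"
  assumes kn: "k < n" and Jn: "J \<subseteq> {..<n}" and kJ: "k \<notin> J" and p2: "2 < CHAR('a)"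
    and T: "\<And>i. i < CHAR('a) \<Longrightarrow> Gm n k J lam (xm i) \<in> T"
    and i: "i < CHAR('a)"
  shows "Gm n k J lam (xm i) \<in> lspan {wbr n D E | D E. D \<in> T \<and> E \<in> T}"
proof -
  have p0: "0 < CHAR('a)" and p1: "1 < CHAR('a)" using p2 by auto
  let ?B = "{wbr n D E | D E. D \<in> T \<and> E \<in> T}"
  show ?thesis
  proof (cases "i = 1")
    case True
    have two: "(2::'a) \<noteq> 0"
    proof
      assume "(2::'a) = 0"
      hence "of_nat 2 = (0::'a)" by simp
      hence "CHAR('a) dvd 2" by (simp only: of_nat_eq_0_iff_char_dvd)
      thus False using p2 by (auto dest: dvd_imp_le)
    qed
    have "wbr n (Gm n k J lam (xm 0)) (Gm n k J lam (xm 2)) = wsmul 2 (Gm n k J lam (xm 1))"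
      unfolding Gm_bracket[OF kn Jn kJ p1 xm_tpa xm_tpa] br1_02[OF p0] Gm_smul ..
    moreover have "wbr n (Gm n k J lam (xm 0)) (Gm n k J lam (xm 2)) \<in> ?B"
      using T[OF p0] T[OF p2] by blast
    hence "wsmul (1/2) (wbr n (Gm n k J lam (xm 0)) (Gm n k J lam (xm 2))) \<in> lspan ?B"
      by (rule lspan_smul[OF lspan_single])
    ultimately have "wsmul (1/2) (wsmul 2 (Gm n k J lam (xm 1))) \<in> lspan ?B"
      by simp
    thus ?thesis using True wsmul_inv[OF two] by simp
  next
    case False
    have c: "(of_nat i - 1 :: 'a) \<noteq> 0"
    proof
      assume "(of_nat i - 1 :: 'a) = 0"
      note z = this
      show False
      proof (cases "i = 0")
        case True thus False using z by simp
      next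
        case False2: False
        hence "of_nat (i - 1) = (of_nat i - 1 :: 'a)" by (simp add: of_nat_diff)
        hence "of_nat (i - 1) = (0::'a)" using z by simp
        hence "CHAR('a) dvd (i - 1)" by (simp only: of_nat_eq_0_iff_char_dvd)
        moreover have "i - 1 > 0" using False False2 by simp
        ultimately have "CHAR('a) \<le> i - 1" by (rule dvd_imp_le)
        thus False using i by simp
      qed
    qed
    have "wbr n (Gm n k J lam (xm 1)) (Gm n k J lam (xm i)) = wsmul (of_nat i - 1) (Gm n k J lam (xm i))"
      unfolding Gm_bracket[OF kn Jn kJ p1 xm_tpa xm_tpa] br1_x1[OF p0] Gm_smul ..
    moreover have "wbr n (Gm n k J lam (xm 1)) (Gm n k J lam (xm i)) \<in> ?B"
      using T[OF p1] T[OF i] by blast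
    hence "wsmul (1/(of_nat i - 1)) (wbr n (Gm n k J lam (xm 1)) (Gm n k J lam (xm i))) \<in> lspan ?B"
      by (rule lspan_smul[OF lspan_single])
    ultimately have "wsmul (1/(of_nat i - 1)) (wsmul (of_nat i - 1) (Gm n k J lam (xm i))) \<in> lspan ?B"
      by simp
    thus ?thesis using wsmul_inv[OF c] by simp
  qed
qed



lemma imgW_eq:
  assumes n: "1 \<le> n"
  shows "imgW n i = Gm n 0 {} 1 (xm i :: 'a::field tpoly)"
proof -
  have lam: "(\<lambda>l::nat. if l = 0 then i else if l = 0 then 0 else (0::nat)) = (\<lambda>k. if k = 0 then i else 0)"
    by (rule ext) simp
  have e: "xmon n (\<lambda>k. if k = 0 then i else 0) = (ebd n 0 0 0 (xm i) :: 'a tpoly)"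
    using xmon_ebd[where k=0 and n=n and a=i and j=0 and m=0, where 'a='a] n unfolding lam by simp
  show ?thesis by (intro ext) (simp add: imgW_def Gm_def e)
qed

lemma psmul_zero: "psmul c (\<lambda>_. 0) = (\<lambda>_. (0::'a::field))"
  by (simp add: psmul_def)

lemma imgS_eq:
  assumes n: "2 \<le> n" and p1: "1 < CHAR('a)"
  shows "imgS n i = Gm n 0 {1} (-1) (xm i :: 'a::field tpoly)"
proof -
  have n0: "0 < n" and n1: "1 < n" using n by auto
  have "xmon n (\<lambda>l. if l = 0 then i else if l = 1 then 1 else 0) = (ebd n 0 1 1 (xm i) :: 'a tpoly)"
    by (rule xmon_ebd[OF n0])
  note F = this
  have d1: "pd n 1 (ebd n 0 1 1 (xm i)) = (ebd n 0 0 0 (xm i) :: 'a tpoly)"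
    using pd_ebd_j[of 1 0 n, OF _ n1 p1] by (simp add: ebd_0')
  have d0: "pd n 0 (ebd n 0 1 1 (xm i)) = (ebd n 0 1 1 (pd 1 0 (xm i)) :: 'a tpoly)"
    by (rule pd_ebd_k[OF n0])
  show ?thesis by (intro ext) (simp add: imgS_def Dij_def Gm_def F d1 d0)
qed

lemma imgH_eq:
  assumes r: "1 \<le> r" and p1: "1 < CHAR('a)"
  shows "imgH r i = Gm (2*r) 0 {r} (-1) (xm i :: 'a::field tpoly)"
proof -
  have n0: "0 < 2*r" and rn: "r < 2*r" and r0: "r \<noteq> 0" using r by auto
  have "xmon (2*r) (\<lambda>l. if l = 0 then i else if l = r then 1 else 0) = (ebd (2*r) 0 r 1 (xm i) :: 'a tpoly)"
    by (rule xmon_ebd[OF n0])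
  note F = this
  have dr: "pd (2*r) r (ebd (2*r) 0 r 1 (xm i)) = (ebd (2*r) 0 0 0 (xm i) :: 'a tpoly)"
    using pd_ebd_j[of r 0 "2*r", OF r0 rn p1] r0 by (simp add: ebd_0')
  have d0: "pd (2*r) 0 (ebd (2*r) 0 r 1 (xm i)) = (ebd (2*r) 0 r 1 (pd 1 0 (xm i)) :: 'a tpoly)"
    by (rule pd_ebd_k[OF n0])
  show ?thesis
  proof (intro ext)
    fix l \<gamma>
    show "(imgH r i l \<gamma> :: 'a) = Gm (2*r) 0 {r} (-1) (xm i) l \<gamma>"
    proof (cases "l < 2*r")
      case False thus ?thesis using r by (simp add: imgH_def DH_def Gm_def wsmul_def psmul_def pzero_def)
    next
      case True
      show ?thesis
      proof (cases "l = 0")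
        case True thus ?thesis using r0 n0 unfolding imgH_def F
          by (simp add: DH_def Gm_def wsmul_def psmul_def prm_def sig_def dr)
      next
        case l0: False
        show ?thesis
        proof (cases "l = r")
          case True thus ?thesis using r0 rn unfolding imgH_def F
            by (simp add: DH_def Gm_def wsmul_def psmul_def prm_def sig_def d0)
        next
          case False
          have "prm r l \<noteq> 0" "prm r l \<noteq> r" using False l0 \<open>l < 2*r\<close> by (auto simp: prm_def)
          hence "pd (2*r) (prm r l) (ebd (2*r) 0 r 1 (xm i)) = (\<lambda>_. 0::'a)" by (simp add: pd_ebd_other)
          thus ?thesis using False l0 \<open>l < 2*r\<close> unfolding imgH_def F
            by (simp add: DH_def Gm_def wsmul_def psmul_def pzero_def)
        qed
      qed
    qed
  qed
qed

lemma sum_split_add: "(\<Sum>i<a+b. g i) = (\<Sum>i<a. g i) + (\<Sum>i<b. g (a + i :: nat)) "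
  by (induction b) (simp_all add: add.assoc)

lemma imgK_eq:
  assumes r: "1 \<le> r" and p2: "2 < CHAR('a)"
  shows "imgK r i = Gm (2*r+1) (2*r) {..<2*r} (1/2) (xm i :: 'a::field tpoly)"
proof -
  let ?n = "2*r+1" and ?t = "2*r"
  have p1: "1 < CHAR('a)" and p0: "0 < CHAR('a)" using p2 by auto
  have tn: "?t < ?n" by simp
  have two: "(2::'a) \<noteq> 0"
  proof
    assume "(2::'a) = 0"
    hence "of_nat 2 = (0::'a)" by simp
    hence "CHAR('a) dvd 2" by (simp only: of_nat_eq_0_iff_char_dvd)
    thus False using p2 by (auto dest: dvd_imp_le)
  qed
  have lam: "(\<lambda>l::nat. if l = ?t then i else if l = ?t then 0 else (0::nat)) = (\<lambda>k. if k = ?t then i else 0)"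
    by (rule ext) simp
  have F: "xmon ?n (\<lambda>k. if k = ?t then i else 0) = (ebd ?n ?t ?t 0 (xm i) :: 'a tpoly)"
    using xmon_ebd[where k="?t" and n="?n" and a=i and j="?t" and m=0, where 'a='a] unfolding lam by simp
  let ?F = "ebd ?n ?t ?t 0 (xm i) :: 'a tpoly"
  let ?P = "pd ?n ?t ?F"
  have P: "?P = ebd ?n ?t ?t 0 (pd 1 0 (xm i))" by (rule pd_ebd_k[OF tn])
  have prm_lt: "j < ?t \<Longrightarrow> prm r j < ?t" for j by (auto simp: prm_def)
  have prm_prm: "j < ?t \<Longrightarrow> prm r (prm r j) = j" for j by (auto simp: prm_def)
  have DKc: "DKc r ?F j = pmul ?n (xvar ?n j) ?P" if j: "j < ?t" for j
  proof -
    have "pd ?n (prm r j) ?F = (\<lambda>_. 0)" using prm_lt[OF j] by (intro pd_ebd_other) auto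
    thus ?thesis by (intro ext) (simp add: DKc_def padd_def psmul_def)
  qed
  have xP: "pmul ?n (xvar ?n j) ?P = ebd ?n ?t j 1 (pd 1 0 (xm i))" if j: "j < ?t" for j
  proof -
    have jt: "j \<noteq> ?t" using j by simp
    have "pmul ?n (ebd ?n ?t j 1 one1) (ebd ?n ?t j 0 (pd 1 0 (xm i))) = (ebd ?n ?t j (1+0) (pmul 1 one1 (pd 1 0 (xm i))) :: 'a tpoly)"
      by (rule pmul_ebd[OF jt tn])
    moreover have o: "pmul 1 one1 (pd 1 0 (xm i)) = (pd 1 0 (xm i) :: 'a tpoly)" by (rule pmul_one1[OF pd_tpa p0])
    ultimately show ?thesis using jt
      by (simp add: P xvar_ebd_j[OF jt tn] ebd_0')
  qed
  define Q where "Q j = pmul ?n (xvar ?n j) (pmul ?n (xvar ?n (prm r j)) ?P)" for j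
  have sw: "pmul m X (pmul m Y Z) = pmul m Y (pmul m X Z)" for m and X Y Z :: "'a tpoly"
  proof -
    have "pmul m X (pmul m Y Z) = pmul m (pmul m X Y) Z" by (simp only: pmul_assoc)
    also have "\<dots> = pmul m (pmul m Y X) Z" by (simp only: pmul_comm[of m X Y])
    also have "\<dots> = pmul m Y (pmul m X Z)" by (simp only: pmul_assoc)
    finally show ?thesis .
  qed
  have Qs: "Q (prm r j) = Q j" if "j < ?t" for j
    unfolding Q_def prm_prm[OF that] by (rule sw)
  have sum0: "(\<Sum>j<?t. sig r j * pmul ?n (xvar ?n j) (DKc r ?F (prm r j)) \<gamma>) = 0" for \<gamma>
  proof -
    have "(\<Sum>j<?t. sig r j * pmul ?n (xvar ?n j) (DKc r ?F (prm r j)) \<gamma>) = (\<Sum>j<?t. sig r j * Q j \<gamma>)"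
    proof (rule sum.cong[OF refl])
      fix j assume "j \<in> {..<?t}"
      hence j: "j < ?t" by simp
      show "sig r j * pmul ?n (xvar ?n j) (DKc r ?F (prm r j)) \<gamma> = sig r j * Q j \<gamma>"
        unfolding DKc[OF prm_lt[OF j]] Q_def ..
    qed
    also have "\<dots> = (\<Sum>j<r+r. sig r j * Q j \<gamma>)" by (simp only: mult_2)
    also have "\<dots> = (\<Sum>j<r. sig r j * Q j \<gamma>) + (\<Sum>j<r. sig r (r + j) * Q (r + j) \<gamma>)"
      by (rule sum_split_add)
    also have "\<dots> = (\<Sum>j<r. Q j \<gamma>) + (\<Sum>j<r. - Q j \<gamma>)"
    proof -
      have "Q (r + j) = Q j" if "j < r" for j
        using Qs[of "r + j"] that by (simp add: prm_def)
      thus ?thesis by (auto simp: sig_def intro!: sum.cong arg_cong2[where f="(+)"])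
    qed
    also have "\<dots> = 0" by (simp add: sum_negf)
    finally show ?thesis .
  qed
  show ?thesis
  proof (intro ext)
    fix l \<gamma>
    show "(imgK r i l \<gamma> :: 'a) = Gm ?n ?t {..<?t} (1/2) (xm i) l \<gamma>"
    proof (cases "l < ?t")
      case True
      thus ?thesis
        by (simp add: imgK_def DK_def Gm_def wsmul_def psmul_def F DKc xP)
    next
      case False
      show ?thesis
      proof (cases "l = ?t")
        case True
        thus ?thesis using two
          by (simp add: imgK_def DK_def Gm_def wsmul_def psmul_def F sum0)
      next
        case False2: False
        thus ?thesis using False
          by (simp add: imgK_def DK_def Gm_def wsmul_def psmul_def pzero_def)
      qed
    qed
  qed
qed



lemma pd_neg: "pd n i (\<lambda>\<gamma>. - F \<gamma>) = (\<lambda>\<gamma>. - pd n i (F::'a::field tpoly) \<gamma>)"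
  using pd_smul[of n i "-1" F] by simp

lemma Gm_Stilde:
  fixes f :: "'a::field tpoly"
  assumes kn: "k < n" and jn: "j < n" and jk: "j \<noteq> k" and p1: "1 < CHAR('a)"
  shows "Gm n k {j} (-1) f \<in> Stilde n"
proof -
  have W: "Gm n k {j} (-1) f \<in> Wn n"
    by (rule Gm_Wn) (use kn jn jk p1 in auto)
  have "(\<Sum>i<n. pd n i (Gm n k {j} (-1) f i) \<gamma>) = 0" for \<gamma>
  proof -
    have "(\<Sum>i<n. pd n i (Gm n k {j} (-1) f i) \<gamma>) = (\<Sum>i\<in>{k, j}. pd n i (Gm n k {j} (-1) f i) \<gamma>)"
    proof (rule sum.mono_neutral_right)
      show "\<forall>i\<in>{..<n} - {k, j}. pd n i (Gm n k {j} (-1) f i) \<gamma> = 0"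
        by (auto simp: Gm_def pzero_def pd_zero)
    qed (use kn jn in auto)
    also have "\<dots> = pd n k (ebd n k k 0 f) \<gamma> + pd n j (psmul (-1) (ebd n k j 1 (pd 1 0 f))) \<gamma>"
      using jk by (simp add: Gm_def)
    also have "\<dots> = ebd n k k 0 (pd 1 0 f) \<gamma> - ebd n k k 0 (pd 1 0 f) \<gamma>"
      using pd_ebd_j[OF jk jn p1, of "pd 1 0 f"] jk
      by (simp add: pd_ebd_k[OF kn] psmul_def pd_neg ebd_0')
    finally show ?thesis by simp
  qed
  thus ?thesis using W by (simp add: Stilde_def)
qed

lemma lam_minus1: "0 < CHAR('a) \<Longrightarrow> (-1::'a::field) = of_nat (CHAR('a) - 1)"
proof -
  assume p0: "0 < CHAR('a)"
  have "of_nat (CHAR('a) - 1) = (of_nat CHAR('a) - 1 :: 'a)" using p0 by (simp add: of_nat_diff)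
  thus ?thesis by simp
qed

lemma lam_half:
  assumes pr: "prime CHAR('a::field)" and p2: "2 < CHAR('a)"
  shows "(1/2::'a) = of_nat ((CHAR('a) + 1) div 2)"
proof -
  have odd: "odd (CHAR('a))" by (rule prime_odd_nat[OF pr p2])
  hence e: "2 * ((CHAR('a) + 1) div 2) = CHAR('a) + 1" by presburger
  have two: "(2::'a) \<noteq> 0"
  proof
    assume "(2::'a) = 0"
    hence "of_nat 2 = (0::'a)" by simp
    hence "CHAR('a) dvd 2" by (simp only: of_nat_eq_0_iff_char_dvd)
    thus False using p2 by (auto dest: dvd_imp_le)
  qed
  have "(2::'a) * of_nat ((CHAR('a) + 1) div 2) = of_nat (2 * ((CHAR('a) + 1) div 2))" by simp
  also have "\<dots> = 1" unfolding e by simp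
  finally show ?thesis using two by (simp add: field_simps)
qed

theorem lemma2p1:
  assumes "CHAR('a::alg_closed_field) > 2"
  shows "(\<forall>n\<ge>1. inj_rhom n (Wn n) (theta (imgW n :: nat \<Rightarrow> 'a wder)))
       \<and> (\<forall>n\<ge>2. inj_rhom n (Sn n) (theta (imgS n :: nat \<Rightarrow> 'a wder)))
       \<and> (\<forall>r\<ge>1. inj_rhom (2*r) (Hn r) (theta (imgH r :: nat \<Rightarrow> 'a wder)))
       \<and> (\<forall>r\<ge>1. inj_rhom (2*r+1) (Kn r) (theta (imgK r :: nat \<Rightarrow> 'a wder)))"
proof -
  have p2: "2 < CHAR('a)" by (rule assms)
  have p0: "0 < CHAR('a)" and p1: "1 < CHAR('a)" using p2 by auto
  have pr: "prime CHAR('a)" by (rule prime_CHAR_semidom[OF p0])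
  have W: "inj_rhom n (Wn n) (theta (imgW n :: nat \<Rightarrow> 'a wder))" if n: "1 \<le> n" for n
  proof (rule inj_rhom_Gm[where k=0 and J="{}" and lam=1 and m=1])
    show "0 < n" using n by simp
    show "(1::'a) = of_nat 1" by simp
    fix i assume "i < CHAR('a)"
    show "imgW n i = (Gm n 0 {} 1 (xmon 1 (mono1 i)) :: 'a wder)" by (rule imgW_eq[OF n])
  next
    fix D :: "'a wder" assume D: "D \<in> Wn 1"
    have "theta (imgW n) D = Gm n 0 {} 1 (D 0)"
      by (rule theta_Gm) (simp_all add: imgW_eq[OF n] Wn1_0[OF D])
    also have "\<dots> \<in> Wn n" by (rule Gm_Wn) (use n p1 in auto)
    finally show "theta (imgW n) D \<in> Wn n" .
  qed (use pr in auto)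
  have S: "inj_rhom n (Sn n) (theta (imgS n :: nat \<Rightarrow> 'a wder))" if n: "2 \<le> n" for n
  proof (rule inj_rhom_Gm[where k=0 and J="{1}" and lam="-1" and m="CHAR('a) - 1"])
    show "0 < n" using n by simp
    show "{1} \<subseteq> {..<n}" using n by simp
    show "(-1::'a) = of_nat (CHAR('a) - 1)" by (rule lam_minus1[OF p0])
    fix i assume "i < CHAR('a)"
    show "imgS n i = (Gm n 0 {1} (-1) (xmon 1 (mono1 i)) :: 'a wder)" by (rule imgS_eq[OF n p1])
  next
    fix D :: "'a wder" assume D: "D \<in> Wn 1"
    show "theta (imgS n) D \<in> Sn n"
      unfolding Sn_def
    proof (rule theta_lspan)
      fix i assume i: "i < CHAR('a)"
      have "(Gm n 0 {1} (-1) (xm i) :: 'a wder) \<in> lspan {wbr n D E |D E. D \<in> Stilde n \<and> E \<in> Stilde n}"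
      proof (rule Gm_brackets[OF _ _ _ p2 _ i])
        fix i show "(Gm n 0 {1} (-1) (xm i) :: 'a wder) \<in> Stilde n"
          by (rule Gm_Stilde) (use n p1 in auto)
      qed (use n in auto)
      thus "(imgS n i :: 'a wder) \<in> lspan {wbr n D E |D E. D \<in> Stilde n \<and> E \<in> Stilde n}"
        by (simp add: imgS_eq[OF n p1])
    qed
  qed (use pr n in auto)
  have H: "inj_rhom (2*r) (Hn r) (theta (imgH r :: nat \<Rightarrow> 'a wder))" if r: "1 \<le> r" for r
  proof (rule inj_rhom_Gm[where k=0 and J="{r}" and lam="-1" and m="CHAR('a) - 1"])
    show "0 < 2*r" using r by simp
    show "{r} \<subseteq> {..<2*r}" using r by simp
    show "0 \<notin> {r}" using r by simp
    show "(-1::'a) = of_nat (CHAR('a) - 1)" by (rule lam_minus1[OF p0])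
    fix i assume "i < CHAR('a)"
    show "imgH r i = (Gm (2*r) 0 {r} (-1) (xmon 1 (mono1 i)) :: 'a wder)" by (rule imgH_eq[OF r p1])
  next
    fix D :: "'a wder" assume D: "D \<in> Wn 1"
    show "theta (imgH r) D \<in> Hn r"
      unfolding Hn_def
    proof (rule theta_lspan)
      fix i assume i: "i < CHAR('a)"
      let ?\<alpha> = "\<lambda>k. if k = 0 then i else if k = r then 1 else (0::nat)"
      have a1: "?\<alpha> \<in> idx CHAR('a) (2*r)" using i p1 r by (auto simp: idx_def)
      have a2: "?\<alpha> \<noteq> (\<lambda>_. 0)"
      proof
        assume "?\<alpha> = (\<lambda>_. 0)"
        hence "?\<alpha> r = (\<lambda>_. (0::nat)) r" by (rule fun_cong)
        thus False using r by simp
      qed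
      have a3: "?\<alpha> \<noteq> (\<lambda>k. if k < 2*r then CHAR('a) - 1 else 0)"
      proof
        assume "?\<alpha> = (\<lambda>k. if k < 2*r then CHAR('a) - 1 else 0)"
        hence "?\<alpha> r = (\<lambda>k. if k < 2*r then CHAR('a) - 1 else 0) r" by (rule fun_cong)
        thus False using r p2 by simp
      qed
      have "DH r (xmon (2*r) ?\<alpha>) \<in> {DH r (xmon (2*r) \<alpha>) | \<alpha>. \<alpha> \<in> idx CHAR('a) (2*r) \<and> \<alpha> \<noteq> (\<lambda>_. 0)
                  \<and> \<alpha> \<noteq> (\<lambda>k. if k < 2*r then CHAR('a) - 1 else 0)}"
        using a1 a2 a3 by blast
      hence "wsmul (-1) (DH r (xmon (2*r) ?\<alpha>)) \<in> lspan {DH r (xmon (2*r) \<alpha>) | \<alpha>. \<alpha> \<in> idx CHAR('a) (2*r) \<and> \<alpha> \<noteq> (\<lambda>_. 0)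
                  \<and> \<alpha> \<noteq> (\<lambda>k. if k < 2*r then CHAR('a) - 1 else 0)}"
        by (rule lspan_smul[OF lspan_single])
      thus "(imgH r i :: 'a wder) \<in> lspan {DH r (xmon (2*r) \<alpha>) | \<alpha>. \<alpha> \<in> idx CHAR('a) (2*r) \<and> \<alpha> \<noteq> (\<lambda>_. 0)
                  \<and> \<alpha> \<noteq> (\<lambda>k. if k < 2*r then CHAR('a) - 1 else 0)}"
        by (simp add: imgH_def)
    qed
  qed (use pr r in auto)
  have K: "inj_rhom (2*r+1) (Kn r) (theta (imgK r :: nat \<Rightarrow> 'a wder))" if r: "1 \<le> r" for r
  proof (rule inj_rhom_Gm[where k="2*r" and J="{..<2*r}" and lam="1/2" and m="(CHAR('a) + 1) div 2"])
    show "(1/2::'a) = of_nat ((CHAR('a) + 1) div 2)" by (rule lam_half[OF pr p2])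
    fix i assume "i < CHAR('a)"
    show "imgK r i = (Gm (2*r+1) (2*r) {..<2*r} (1/2) (xmon 1 (mono1 i)) :: 'a wder)" by (rule imgK_eq[OF r p2])
  next
    fix D :: "'a wder" assume D: "D \<in> Wn 1"
    have KT: "(Gm (2*r+1) (2*r) {..<2*r} (1/2) (xm i) :: 'a wder) \<in> Ktilde r" if i: "i < CHAR('a)" for i
    proof -
      let ?\<alpha> = "\<lambda>k. if k = 2*r then i else (0::nat)"
      have a1: "?\<alpha> \<in> idx CHAR('a) (2*r+1)" using i p1 by (auto simp: idx_def)
      have "DK r (xmon (2*r+1) ?\<alpha>) \<in> {DK r (xmon (2*r+1) \<alpha>) | \<alpha>. \<alpha> \<in> idx CHAR('a) (2*r+1)}"
        using a1 by blast
      hence "wsmul (1/2) (DK r (xmon (2*r+1) ?\<alpha>)) \<in> (Ktilde r :: 'a wder set)"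
        unfolding Ktilde_def by (rule lspan_smul[OF lspan_single])
      thus ?thesis by (simp add: imgK_eq[OF r p2, symmetric] imgK_def)
    qed
    show "theta (imgK r) D \<in> Kn r"
      unfolding Kn_def
    proof (rule theta_lspan)
      fix i assume i: "i < CHAR('a)"
      have "(Gm (2*r+1) (2*r) {..<2*r} (1/2) (xm i) :: 'a wder) \<in> lspan {wbr (2*r+1) D E |D E. D \<in> Ktilde r \<and> E \<in> Ktilde r}"
        by (rule Gm_brackets[OF _ _ _ p2 KT i]) auto
      thus "(imgK r i :: 'a wder) \<in> lspan {wbr (2*r+1) D E |D E. D \<in> Ktilde r \<and> E \<in> Ktilde r}"
        by (simp add: imgK_eq[OF r p2])
    qed
  qed (use pr r in auto)
  show ?thesis using W S H K by blast
qed


end
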